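(* Let $\mathsf E=\{\mathsf E_x\}_{x\in\mathcal X}$ be a non-trivial observable on $\mathcal H_S$. Its Lüders instrument $\mathcal I^L_x(\rho)=\sqrt{\mathsf E_x}\,\rho\,\sqrt{\mathsf E_x}$ is implemented by some measurement scheme constrained by the third law if and only if $\mathsf E$ is completely unsharp.
   Context: All Hilbert spaces are finite-dimensional and complex. A state is a positive operator of unit trace; it is full-rank if it is positive definite. A channel is a completely positive trace-preserving linear map. A channel is constrained by the third law if it maps every full-rank state on its input space to a full-rank state on its output space. Let $2\le\dim\mathcal H_S<\infty$. An observable is a finite family $\mathsf E=\{\mathsf E_x\}_{x\in\mathcal X}$ of nonzero operators with $0\le\mathsf E_x\le\mathbb 1$ and $\sum_x\mathsf E_x=\mathbb 1$. It is non-trivial if some $\mathsf E_x$ is not a multiple of $\mathbb 1$. It is completely unsharp if, for every $x$, the spectrum of $\mathsf E_x$ contains neither $0$ nor $1$. A measurement scheme $(\mathcal H_A,\xi,\mathcal E,\mathsf Z)$ consists of: - a finite-dimensional $\mathcal H_A$; - a state $\xi$ on $\mathcal H_A$; - a channel $\mathcal E$ on $\mathcal L(\mathcal H_S\otimes\mathcal H_A)$; - positive operators $\{\mathsf Z_x\}_{x\in\mathcal X}$ on $\mathcal H_A$ summing to $\mathbb 1$. It implements $\mathcal I_x(\rho)=\mathrm{tr}_A[(\mathbb 1\otimes\mathsf Z_x)\mathcal E(\rho\otimes\xi)]$. It is constrained by the third law if $\xi$ is full-rank and $\mathcal E$ is constrained by the third law. *)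

theory Defs
  imports "Jordan_Normal_Form.Char_Poly"
begin

text \<open>Operators on a d-dimensional Hilbert space are complex d x d matrices
(Jordan_Normal_Form type complex mat, with carrier_mat d d).
Tensor products are Kronecker products: the left factor is the major index.\<close>

definition mtrace :: "complex mat \<Rightarrow> complex" where
  "mtrace A = (\<Sum>i<dim_row A. A $$ (i, i))"

definition qform :: "nat \<Rightarrow> complex mat \<Rightarrow> complex vec \<Rightarrow> complex" where
  "qform d A v = (\<Sum>i<d. \<Sum>j<d. cnj (v $ i) * A $$ (i, j) * v $ j)"

definition positive_op :: "nat \<Rightarrow> complex mat \<Rightarrow> bool" where
  "positive_op d A \<longleftrightarrow> A \<in> carrier_mat d d \<and>
     (\<forall>v \<in> carrier_vec d. Im (qform d A v) = 0 \<and> Re (qform d A v) \<ge> 0)"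

definition pos_def_op :: "nat \<Rightarrow> complex mat \<Rightarrow> bool" where
  "pos_def_op d A \<longleftrightarrow> A \<in> carrier_mat d d \<and>
     (\<forall>v \<in> carrier_vec d. v \<noteq> 0\<^sub>v d \<longrightarrow> Im (qform d A v) = 0 \<and> Re (qform d A v) > 0)"

definition is_state :: "nat \<Rightarrow> complex mat \<Rightarrow> bool" where
  "is_state d \<rho> \<longleftrightarrow> positive_op d \<rho> \<and> mtrace \<rho> = 1"

definition full_rank_state :: "nat \<Rightarrow> complex mat \<Rightarrow> bool" where
  "full_rank_state d \<rho> \<longleftrightarrow> is_state d \<rho> \<and> pos_def_op d \<rho>"

definition kron :: "complex mat \<Rightarrow> complex mat \<Rightarrow> complex mat" where
  "kron A B = mat (dim_row A * dim_row B) (dim_col A * dim_col B)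
     (\<lambda>(i, j). A $$ (i div dim_row B, j div dim_col B) * B $$ (i mod dim_row B, j mod dim_col B))"

definition ptrace2 :: "nat \<Rightarrow> nat \<Rightarrow> complex mat \<Rightarrow> complex mat" where
  "ptrace2 dA dB M = mat dA dA (\<lambda>(i, j). \<Sum>b<dB. M $$ (i * dB + b, j * dB + b))"

definition linear_map :: "nat \<Rightarrow> nat \<Rightarrow> (complex mat \<Rightarrow> complex mat) \<Rightarrow> bool" where
  "linear_map n m \<Phi> \<longleftrightarrow>
     (\<forall>A \<in> carrier_mat n n. \<Phi> A \<in> carrier_mat m m) \<and>
     (\<forall>A \<in> carrier_mat n n. \<forall>B \<in> carrier_mat n n. \<Phi> (A + B) = \<Phi> A + \<Phi> B) \<and>
     (\<forall>A \<in> carrier_mat n n. \<forall>c. \<Phi> (c \<cdot>\<^sub>m A) = c \<cdot>\<^sub>m \<Phi> A)"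

definition block :: "nat \<Rightarrow> complex mat \<Rightarrow> nat \<Rightarrow> nat \<Rightarrow> complex mat" where
  "block n X i j = mat n n (\<lambda>(a, b). X $$ (i * n + a, j * n + b))"

text \<open>The map id_k tensor Phi on L(C^k tensor C^n).\<close>
definition ampl :: "nat \<Rightarrow> nat \<Rightarrow> nat \<Rightarrow> (complex mat \<Rightarrow> complex mat) \<Rightarrow> complex mat \<Rightarrow> complex mat" where
  "ampl k n m \<Phi> X = mat (k * m) (k * m)
     (\<lambda>(p, q). \<Phi> (block n X (p div m) (q div m)) $$ (p mod m, q mod m))"

definition completely_positive :: "nat \<Rightarrow> nat \<Rightarrow> (complex mat \<Rightarrow> complex mat) \<Rightarrow> bool" where
  "completely_positive n m \<Phi> \<longleftrightarrow>
     (\<forall>k. \<forall>X. positive_op (k * n) X \<longrightarrow> positive_op (k * m) (ampl k n m \<Phi> X))"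

definition trace_preserving :: "nat \<Rightarrow> (complex mat \<Rightarrow> complex mat) \<Rightarrow> bool" where
  "trace_preserving n \<Phi> \<longleftrightarrow> (\<forall>A \<in> carrier_mat n n. mtrace (\<Phi> A) = mtrace A)"

definition is_channel :: "nat \<Rightarrow> nat \<Rightarrow> (complex mat \<Rightarrow> complex mat) \<Rightarrow> bool" where
  "is_channel n m \<Phi> \<longleftrightarrow> linear_map n m \<Phi> \<and> completely_positive n m \<Phi> \<and> trace_preserving n \<Phi>"

definition third_law_channel :: "nat \<Rightarrow> nat \<Rightarrow> (complex mat \<Rightarrow> complex mat) \<Rightarrow> bool" where
  "third_law_channel n m \<Phi> \<longleftrightarrow> is_channel n m \<Phi> \<and>
     (\<forall>\<rho>. full_rank_state n \<rho> \<longrightarrow> full_rank_state m (\<Phi> \<rho>))"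

definition msum :: "nat \<Rightarrow> 'x set \<Rightarrow> ('x \<Rightarrow> complex mat) \<Rightarrow> complex mat" where
  "msum d X F = mat d d (\<lambda>(i, j). \<Sum>x\<in>X. F x $$ (i, j))"

definition observable :: "nat \<Rightarrow> 'x set \<Rightarrow> ('x \<Rightarrow> complex mat) \<Rightarrow> bool" where
  "observable d X E \<longleftrightarrow> finite X \<and>
     (\<forall>x \<in> X. E x \<noteq> 0\<^sub>m d d \<and> positive_op d (E x) \<and> positive_op d (1\<^sub>m d - E x)) \<and>
     msum d X E = 1\<^sub>m d"

definition nontrivial_obs :: "nat \<Rightarrow> 'x set \<Rightarrow> ('x \<Rightarrow> complex mat) \<Rightarrow> bool" where
  "nontrivial_obs d X E \<longleftrightarrow> (\<exists>x \<in> X. \<not> (\<exists>c. E x = c \<cdot>\<^sub>m 1\<^sub>m d))"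

definition completely_unsharp :: "'x set \<Rightarrow> ('x \<Rightarrow> complex mat) \<Rightarrow> bool" where
  "completely_unsharp X E \<longleftrightarrow> (\<forall>x \<in> X. \<not> eigenvalue (E x) 0 \<and> \<not> eigenvalue (E x) 1)"

definition psd_sqrt :: "nat \<Rightarrow> complex mat \<Rightarrow> complex mat" where
  "psd_sqrt d A = (THE B. positive_op d B \<and> B * B = A)"

definition lueders :: "nat \<Rightarrow> ('x \<Rightarrow> complex mat) \<Rightarrow> 'x \<Rightarrow> complex mat \<Rightarrow> complex mat" where
  "lueders d E x \<rho> = psd_sqrt d (E x) * \<rho> * psd_sqrt d (E x)"

text \<open>Measurement scheme (H_A = C^dA, xi, channel Phi on S tensor A, pointer Z)
for system dimension dS and outcome set X.\<close>
definition measurement_scheme ::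
  "nat \<Rightarrow> 'x set \<Rightarrow> nat \<Rightarrow> complex mat \<Rightarrow> (complex mat \<Rightarrow> complex mat) \<Rightarrow> ('x \<Rightarrow> complex mat) \<Rightarrow> bool" where
  "measurement_scheme dS X dA \<xi> \<Phi> Z \<longleftrightarrow>
     is_state dA \<xi> \<and> is_channel (dS * dA) (dS * dA) \<Phi> \<and>
     (\<forall>x \<in> X. positive_op dA (Z x)) \<and> msum dA X Z = 1\<^sub>m dA"

definition third_law_scheme ::
  "nat \<Rightarrow> 'x set \<Rightarrow> nat \<Rightarrow> complex mat \<Rightarrow> (complex mat \<Rightarrow> complex mat) \<Rightarrow> ('x \<Rightarrow> complex mat) \<Rightarrow> bool" where
  "third_law_scheme dS X dA \<xi> \<Phi> Z \<longleftrightarrow>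
     measurement_scheme dS X dA \<xi> \<Phi> Z \<and> full_rank_state dA \<xi> \<and>
     third_law_channel (dS * dA) (dS * dA) \<Phi>"

definition scheme_instrument ::
  "nat \<Rightarrow> nat \<Rightarrow> complex mat \<Rightarrow> (complex mat \<Rightarrow> complex mat) \<Rightarrow> ('x \<Rightarrow> complex mat) \<Rightarrow> 'x \<Rightarrow> complex mat \<Rightarrow> complex mat" where
  "scheme_instrument dS dA \<xi> \<Phi> Z x \<rho> =
     ptrace2 dS dA (kron (1\<^sub>m dS) (Z x) * \<Phi> (kron \<rho> \<xi>))"

end

theory Submission
  imports Defs "Jordan_Normal_Form.Schur_Decomposition"
begin

definition adj :: "complex mat \<Rightarrow> complex mat" where
  "adj A = mat (dim_col A) (dim_row A) (\<lambda>(i,j). cnj (A $$ (j,i)))"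

definition ip :: "complex vec \<Rightarrow> complex vec \<Rightarrow> complex" where
  "ip u v = (\<Sum>i<dim_vec v. cnj (u $ i) * v $ i)"

lemma adj_carrier[simp]: "A \<in> carrier_mat m n \<Longrightarrow> adj A \<in> carrier_mat n m"
  by (auto simp: adj_def)
lemma adj_dims[simp]: "dim_row (adj A) = dim_col A" "dim_col (adj A) = dim_row A"
  by (auto simp: adj_def)
lemma adj_index[simp]: "i < dim_col A \<Longrightarrow> j < dim_row A \<Longrightarrow> adj A $$ (i,j) = cnj (A $$ (j,i))"
  by (auto simp: adj_def)
lemma adj_adj[simp]: "adj (adj A) = A"
  by (rule eq_matI, auto)

lemma mult_entry: "A \<in> carrier_mat m k \<Longrightarrow> B \<in> carrier_mat k n \<Longrightarrow> i < m \<Longrightarrow> j < n \<Longrightarrow>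
  (A * B) $$ (i,j) = (\<Sum>l<k. A $$ (i,l) * B $$ (l,j))"
  by (auto simp: scalar_prod_def row_def col_def lessThan_atLeast0 intro!: sum.cong)

lemma mult_vec_entry: "A \<in> carrier_mat m k \<Longrightarrow> v \<in> carrier_vec k \<Longrightarrow> i < m \<Longrightarrow>
  (A *\<^sub>v v) $ i = (\<Sum>l<k. A $$ (i,l) * v $ l)"
  by (auto simp: scalar_prod_def row_def lessThan_atLeast0 intro!: sum.cong)

lemma row_sprod: "A \<in> carrier_mat m k \<Longrightarrow> v \<in> carrier_vec k \<Longrightarrow> i < m \<Longrightarrow>
  row A i \<bullet> v = (\<Sum>l<k. A $$ (i,l) * v $ l)"
  by (auto simp: scalar_prod_def row_def lessThan_atLeast0 intro!: sum.cong)

lemma adj_mult: "A \<in> carrier_mat m k \<Longrightarrow> B \<in> carrier_mat k n \<Longrightarrow> adj (A * B) = adj B * adj A"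
proof (rule eq_matI)
  fix i j assume A: "A \<in> carrier_mat m k" and B: "B \<in> carrier_mat k n" and
    i: "i < dim_row (adj B * adj A)" and j: "j < dim_col (adj B * adj A)"
  hence i': "i < n" and j': "j < m" by auto
  show "adj (A * B) $$ (i, j) = (adj B * adj A) $$ (i, j)"
    using A B i' j' by (simp add: mult_entry[OF adj_carrier[OF B] adj_carrier[OF A] i' j']
        mult_entry[OF A B j' i'] mult.commute)
qed auto

lemma adj_one[simp]: "adj (1\<^sub>m n) = 1\<^sub>m n"
  by (rule eq_matI, auto)

lemma ip_mult: "A \<in> carrier_mat m n \<Longrightarrow> u \<in> carrier_vec m \<Longrightarrow> v \<in> carrier_vec n \<Longrightarrow>
  ip u (A *\<^sub>v v) = ip (adj A *\<^sub>v u) v"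
proof -
  assume A: "A \<in> carrier_mat m n" and u: "u \<in> carrier_vec m" and v: "v \<in> carrier_vec n"
  have "ip u (A *\<^sub>v v) = (\<Sum>i<m. cnj (u$i) * (\<Sum>l<n. A$$(i,l) * v$l))"
    using A u v by (auto simp: ip_def row_sprod[OF A v] intro!: sum.cong)
  also have "\<dots> = (\<Sum>i<m. \<Sum>l<n. cnj (u$i) * A$$(i,l) * v$l)"
    by (simp add: sum_distrib_left mult.assoc)
  also have "\<dots> = (\<Sum>l<n. \<Sum>i<m. cnj (u$i) * A$$(i,l) * v$l)"
    by (rule sum.swap)
  also have "\<dots> = ip (adj A *\<^sub>v u) v"
    using A u v by (auto simp: ip_def row_sprod[OF adj_carrier[OF A] u] sum_distrib_right sum_distrib_left cnj_sum mult.commute mult.left_commute intro!: sum.cong)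
  finally show ?thesis .
qed

lemma ip_self_real: "ip v v = of_real (\<Sum>i<dim_vec v. (cmod (v $ i))^2)"
proof -
  have "\<And>z. cnj z * z = complex_of_real ((cmod z)^2)" using complex_norm_square by (metis mult.commute)
  thus ?thesis by (simp add: ip_def)
qed

lemma ip_self_ge0: "Re (ip v v) \<ge> 0" "Im (ip v v) = 0"
  by (auto simp: ip_self_real intro!: sum_nonneg)

lemma ip_self_zero: "v \<in> carrier_vec n \<Longrightarrow> ip v v = 0 \<Longrightarrow> v = 0\<^sub>v n"
proof -
  assume v: "v \<in> carrier_vec n" and z: "ip v v = 0"
  hence "complex_of_real (\<Sum>i<n. (cmod (v $ i))^2) = 0" using v by (simp only: ip_self_real, simp)
  hence "(\<Sum>i<n. (cmod (v $ i))^2) = 0" by (simp only: of_real_eq_0_iff)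
  hence "\<forall>i\<in>{..<n}. (cmod (v $ i))^2 = 0" by (subst (asm) sum_nonneg_eq_0_iff, auto)
  thus ?thesis using v by (intro eq_vecI, auto)
qed

lemma ip_self_pos: "v \<in> carrier_vec n \<Longrightarrow> v \<noteq> 0\<^sub>v n \<Longrightarrow> Re (ip v v) > 0"
  using ip_self_zero[of v n] ip_self_ge0[of v] by (metis complex_eq_iff less_eq_real_def zero_complex.simps)

lemma ip_cnj: "dim_vec u = dim_vec v \<Longrightarrow> cnj (ip u v) = ip v u"
  by (simp add: ip_def mult.commute)

lemma ip_add_right: "dim_vec v = dim_vec w \<Longrightarrow> ip u (v + w) = ip u v + ip u w"
  by (simp add: ip_def distrib_left sum.distrib)
lemma ip_add_left: "dim_vec u = dim_vec w \<Longrightarrow> dim_vec v = dim_vec w \<Longrightarrow> ip (u + v) w = ip u w + ip v w"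
  by (simp add: ip_def distrib_right sum.distrib)
lemma ip_smult_right: "ip u (c \<cdot>\<^sub>v v) = c * ip u v"
  by (simp add: ip_def sum_distrib_left algebra_simps)
lemma ip_smult_left: "dim_vec u = dim_vec v \<Longrightarrow> ip (c \<cdot>\<^sub>v u) v = cnj c * ip u v"
  by (simp add: ip_def sum_distrib_left algebra_simps)

lemma qform_ip: "A \<in> carrier_mat d d \<Longrightarrow> v \<in> carrier_vec d \<Longrightarrow> qform d A v = ip v (A *\<^sub>v v)"
  by (auto simp: qform_def ip_def row_sprod[of A d d] sum_distrib_left mult.assoc intro!: sum.cong)

lemma sum_delta_r: "j < (d::nat) \<Longrightarrow> (\<Sum>l<d. f l * (if l = j then 1 else 0)) = (f j :: complex)"
proof -
  assume j: "j < d"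
  have "(\<Sum>l<d. f l * (if l = j then 1 else 0)) = (\<Sum>l<d. (if l = j then f l else 0))"
    by (rule sum.cong, auto)
  also have "\<dots> = f j" using j sum.delta[of "{..<d}" j f] by simp
  finally show ?thesis .
qed

lemma sum_delta_l: "j < (d::nat) \<Longrightarrow> (\<Sum>l<d. (if l = j then 1 else 0) * f l) = (f j :: complex)"
  using sum_delta_r[of j d f] by (simp add: mult.commute)

lemma unit_mult: "(A::complex mat) \<in> carrier_mat d d \<Longrightarrow> j < d \<Longrightarrow> A *\<^sub>v unit_vec d j = col A j"
proof (rule eq_vecI)
  fix i assume A: "A \<in> carrier_mat d d" and j: "j < d" and i: "i < dim_vec (col A j)"
  hence i': "i < d" by simp
  have "(A *\<^sub>v unit_vec d j) $ i = (\<Sum>l<d. A $$ (i,l) * (if l = j then 1 else 0))"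
    using A i' by (simp add: row_sprod[of A d d] unit_vec_def)
  also have "\<dots> = A $$ (i,j)" by (rule sum_delta_r[OF j])
  finally show "(A *\<^sub>v unit_vec d j) $ i = col A j $ i" using A i' j by simp
qed auto

lemma ip_unit: "i < d \<Longrightarrow> v \<in> carrier_vec d \<Longrightarrow> ip (unit_vec d i) v = v $ i"
proof -
  assume i: "i < d" and v: "v \<in> carrier_vec d"
  have "\<And>ia. cnj (if ia = i then 1 else 0) = (if ia = i then 1 else (0::complex))" by simp
  thus ?thesis using i v by (auto simp: ip_def unit_vec_def sum_delta_l)
qed

lemma qexp: assumes A: "A \<in> carrier_mat d d" and v: "v \<in> carrier_vec d" and w: "w \<in> carrier_vec d"
  shows "ip (v + c \<cdot>\<^sub>v w) (A *\<^sub>v (v + c \<cdot>\<^sub>v w)) =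
    ip v (A *\<^sub>v v) + c * ip v (A *\<^sub>v w) + cnj c * ip w (A *\<^sub>v v) + cnj c * c * ip w (A *\<^sub>v w)"
proof -
  have cw: "c \<cdot>\<^sub>v w \<in> carrier_vec d" using w by simp
  have "A *\<^sub>v (v + c \<cdot>\<^sub>v w) = A *\<^sub>v v + c \<cdot>\<^sub>v (A *\<^sub>v w)"
    using A v w by (simp add: mult_add_distrib_mat_vec[OF A v cw] mult_mat_vec[OF A w])
  moreover have Av: "dim_vec (A *\<^sub>v v) = d" "dim_vec (A *\<^sub>v w) = d" using A v w by auto
  ultimately show ?thesis using v w
    by (simp add: ip_add_left ip_add_right ip_smult_left ip_smult_right algebra_simps)
qed

lemma pos_herm: assumes P: "positive_op d A" shows "adj A = A"
proof -
  have A: "A \<in> carrier_mat d d" using P by (simp add: positive_op_def)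
  have q: "\<And>v. v \<in> carrier_vec d \<Longrightarrow> Im (ip v (A *\<^sub>v v)) = 0"
    using P A by (simp add: positive_op_def qform_ip)
  show ?thesis
  proof (rule eq_matI)
    fix i j assume "i < dim_row A" "j < dim_col A"
    hence i: "i < d" and j: "j < d" using A by auto
    let ?v = "unit_vec d i" and ?w = "unit_vec d j"
    have v: "?v \<in> carrier_vec d" and w: "?w \<in> carrier_vec d" by auto
    have a: "ip ?v (A *\<^sub>v ?w) = A $$ (i,j)" using A i j by (simp add: unit_mult ip_unit)
    have b: "ip ?w (A *\<^sub>v ?v) = A $$ (j,i)" using A i j by (simp add: unit_mult ip_unit)
    have qv: "Im (ip ?v (A *\<^sub>v ?v)) = 0" and qw: "Im (ip ?w (A *\<^sub>v ?w)) = 0" using q v w by auto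
    have "Im (ip (?v + 1 \<cdot>\<^sub>v ?w) (A *\<^sub>v (?v + 1 \<cdot>\<^sub>v ?w))) = 0" using q v w by simp
    hence 1: "Im (A $$ (i,j)) + Im (A $$ (j,i)) = 0"
      unfolding qexp[OF A v w] a b using qv qw by simp
    have "Im (ip (?v + \<i> \<cdot>\<^sub>v ?w) (A *\<^sub>v (?v + \<i> \<cdot>\<^sub>v ?w))) = 0" using q v w by simp
    hence 2: "Re (A $$ (i,j)) - Re (A $$ (j,i)) = 0"
      unfolding qexp[OF A v w] a b using qv qw by simp
    have "A $$ (j,i) = cnj (A $$ (i,j))" using 1 2 by (simp add: complex_eq_iff)
    thus "adj A $$ (i, j) = A $$ (i, j)" using A i j by simp
  qed (use A in auto)
qed

lemma cscalar_ip: "dim_vec u = dim_vec w \<Longrightarrow> u \<bullet>c w = ip w u"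
  by (simp add: scalar_prod_def ip_def lessThan_atLeast0 mult.commute)

lemma unitary_ext: assumes v: "v \<in> carrier_vec n" and v1: "ip v v = 1"
  shows "\<exists>W \<in> carrier_mat n n. adj W * W = 1\<^sub>m n \<and> col W 0 = v"
proof -
  have v0: "v \<noteq> 0\<^sub>v n" using v1 v by (auto simp: ip_def)
  interpret cof_vec_space n "TYPE(complex)" .
  let ?b = "basis_completion v"
  from basis_completion[OF v v0]
  have dist_b: "distinct ?b" and indep: "\<not> lin_dep (set ?b)" and b: "set ?b \<subseteq> carrier_vec n"
    and hdb: "hd ?b = v" and len_b: "length ?b = n" by auto
  have n: "n > 0" using v0 v by (cases n, auto)
  from hdb len_b n obtain vs where bv: "?b = v # vs" by (cases ?b, auto)
  define ws where "ws = gram_schmidt n ?b"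
  from gram_schmidt_result[OF b dist_b indep ws_def]
  have ws: "set ws \<subseteq> carrier_vec n" "corthogonal ws" "length ws = n"
    by (auto simp: len_b)
  have hdws: "hd ws = v" unfolding ws_def bv using v by simp
  define nr where "nr = (\<lambda>w. complex_of_real (1 / sqrt (Re (ip w w))))"
  define us where "us = map (\<lambda>w. nr w \<cdot>\<^sub>v w) ws"
  define W where "W = mat_of_cols n us"
  have wsc: "\<And>i. i < n \<Longrightarrow> ws ! i \<in> carrier_vec n" using ws by auto
  have usi: "\<And>i. i < n \<Longrightarrow> us ! i = nr (ws ! i) \<cdot>\<^sub>v ws ! i" using ws by (simp add: us_def)
  have W: "W \<in> carrier_mat n n" by (metis W_def length_map mat_of_cols_carrier(1) ws(3) us_def)
  have Wij: "\<And>i j. i < n \<Longrightarrow> j < n \<Longrightarrow> W $$ (i,j) = (us ! j) $ i" using ws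
    by (simp add: W_def mat_of_cols_def us_def)
  have orth: "\<And>i j. i < n \<Longrightarrow> j < n \<Longrightarrow> ip (ws!i) (ws!j) = 0 \<longleftrightarrow> i \<noteq> j"
    using ws corthogonalD[OF ws(2)] wsc by (metis carrier_vecD cscalar_ip)
  have "adj W * W = 1\<^sub>m n"
  proof (rule eq_matI)
    fix i j assume "i < dim_row (1\<^sub>m n)" "j < dim_col (1\<^sub>m n)"
    hence i: "i < n" and j: "j < n" by auto
    have "(adj W * W) $$ (i,j) = (\<Sum>l<n. cnj (W $$ (l,i)) * W $$ (l,j))"
      using W i j by (simp add: mult_entry[OF adj_carrier[OF W] W i j])
    also have "\<dots> = ip (us!i) (us!j)" using i j usi wsc[OF i] wsc[OF j]
      by (auto simp: ip_def Wij intro!: sum.cong)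
    also have "\<dots> = cnj (nr (ws!i)) * nr (ws!j) * ip (ws!i) (ws!j)"
      using usi[OF i] usi[OF j] wsc[OF i] wsc[OF j] by (simp add: ip_smult_left ip_smult_right)
    also have "\<dots> = 1\<^sub>m n $$ (i,j)"
    proof (cases "i = j")
      case True
      have pos: "Re (ip (ws!i) (ws!i)) > 0" using orth[OF i i] True ip_self_ge0[of "ws!i"]
        by (metis complex_eq_iff less_eq_real_def zero_complex.simps(1) zero_complex.simps(2))
      have "ip (ws!i) (ws!i) = complex_of_real (Re (ip (ws!i) (ws!i)))"
        using ip_self_ge0[of "ws!i"] by (simp add: complex_eq_iff)
      moreover have "1 / sqrt (Re (ip (ws!i) (ws!i))) * (1 / sqrt (Re (ip (ws!i) (ws!i))))
          * Re (ip (ws!i) (ws!i)) = 1" using pos by (simp add: field_simps)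
      ultimately show ?thesis using True i unfolding nr_def
        by (metis (no_types, lifting) complex_cnj_complex_of_real index_one_mat(1) of_real_1 of_real_mult)
    next
      case False thus ?thesis using orth[OF i j] i j by simp
    qed
    finally show "(adj W * W) $$ (i, j) = 1\<^sub>m n $$ (i, j)" .
  qed (use W in auto)
  moreover have "col W 0 = v"
  proof -
    have "ws ! 0 = v" using hdws n ws by (metis hd_conv_nth list.size(3) not_less_zero)
    hence u0: "us ! 0 = v" using usi[OF n] v1 by (simp add: nr_def)
    have "length us = n" using ws by (simp add: us_def)
    thus ?thesis unfolding W_def using col_mat_of_cols[of 0 us n] u0 v n by simp
  qed
  ultimately show ?thesis using W by blast
qed

definition diagm :: "nat \<Rightarrow> (nat \<Rightarrow> complex) \<Rightarrow> complex mat" where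
  "diagm n f = mat n n (\<lambda>(i,j). if i = j then f i else 0)"

lemma diagm_carrier[simp]: "diagm n f \<in> carrier_mat n n" by (simp add: diagm_def)
lemma diagm_dims[simp]: "dim_row (diagm n f) = n" "dim_col (diagm n f) = n" by (simp_all add: diagm_def)

lemma mult_diagm: "X \<in> carrier_mat m n \<Longrightarrow> i < m \<Longrightarrow> j < n \<Longrightarrow> (X * diagm n f) $$ (i,j) = X $$ (i,j) * f j"
proof -
  assume X: "X \<in> carrier_mat m n" and i: "i < m" and j: "j < n"
  have "(X * diagm n f) $$ (i,j) = (\<Sum>l<n. X $$ (i,l) * diagm n f $$ (l,j))"
    by (rule mult_entry[OF X diagm_carrier i j])
  also have "\<dots> = (\<Sum>l<n. X $$ (i,l) * (if l = j then f j else 0))"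
    using j by (auto simp: diagm_def intro!: sum.cong)
  also have "\<dots> = (\<Sum>l<n. (if l = j then X $$ (i,j) * f j else 0))" by (rule sum.cong, auto)
  also have "\<dots> = X $$ (i,j) * f j" using j sum.delta[of "{..<n}" j] by simp
  finally show ?thesis .
qed

lemma herm_eig_real: assumes A: "A \<in> carrier_mat n n" and h: "adj A = A"
  and v: "v \<in> carrier_vec n" and v0: "v \<noteq> 0\<^sub>v n" and ev: "A *\<^sub>v v = e \<cdot>\<^sub>v v"
  shows "cnj e = e"
proof -
  have "ip v (A *\<^sub>v v) = ip (A *\<^sub>v v) v" using ip_mult[OF A v v] h by simp
  hence "e * ip v v = cnj e * ip v v" using ev v by (simp add: ip_smult_left ip_smult_right)
  moreover have "ip v v \<noteq> 0" using ip_self_zero[OF v] v0 by auto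
  ultimately show ?thesis by simp
qed

lemma spectral: "A \<in> carrier_mat n n \<Longrightarrow> adj A = A \<Longrightarrow>
  \<exists>U (d::nat\<Rightarrow>real). U \<in> carrier_mat n n \<and> adj U * U = 1\<^sub>m n \<and>
     A * U = U * diagm n (\<lambda>i. complex_of_real (d i))"
proof (induction n arbitrary: A)
  case 0
  have "A = 1\<^sub>m 0 * diagm 0 (\<lambda>i. 0)" using 0 by (intro eq_matI, auto)
  thus ?case by (intro exI[of _ "1\<^sub>m 0"] exI[of _ "\<lambda>_. 0"], insert 0, auto)
next
  case (Suc m A)
  let ?n = "Suc m"
  have A: "A \<in> carrier_mat ?n ?n" and h: "adj A = A" using Suc by auto
  from char_poly_factorized[OF A] obtain as where cp: "char_poly A = (\<Prod>a\<leftarrow>as. [:- a, 1:])"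
    and len: "length as = ?n" by auto
  then obtain e rest where as: "as = e # rest" by (cases as, auto)
  have "poly (char_poly A) e = 0" unfolding cp as by simp
  hence "eigenvalue A e" using eigenvalue_root_char_poly[OF A] by simp
  then obtain v where "eigenvector A v e" unfolding eigenvalue_def by auto
  hence v: "v \<in> carrier_vec ?n" and v0: "v \<noteq> 0\<^sub>v ?n" and ev: "A *\<^sub>v v = e \<cdot>\<^sub>v v"
    using A unfolding eigenvector_def by auto
  have ereal: "cnj e = e" by (rule herm_eig_real[OF A h v v0 ev])
  define er where "er = Re e"
  have e_er: "e = complex_of_real er" using ereal unfolding er_def by (simp add: complex_eq_iff)
  define r where "r = Re (ip v v)"
  have rpos: "r > 0" using ip_self_pos[OF v v0] unfolding r_def .
  have ipvv: "ip v v = complex_of_real r" unfolding r_def using ip_self_ge0[of v] by (simp add: complex_eq_iff)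
  define v1 where "v1 = complex_of_real (1 / sqrt r) \<cdot>\<^sub>v v"
  have v1: "v1 \<in> carrier_vec ?n" unfolding v1_def using v by simp
  define a where "a = 1 / sqrt r"
  have a: "a * a * r = 1" using rpos unfolding a_def by (simp add: field_simps)
  have "ip v1 v1 = cnj (complex_of_real a) * (complex_of_real a * ip v v)"
    unfolding v1_def a_def[symmetric] using v by (simp add: ip_smult_left ip_smult_right)
  also have "\<dots> = complex_of_real (a * a * r)" unfolding ipvv by simp
  also have "\<dots> = 1" using a by simp
  finally have v11: "ip v1 v1 = 1" .
  have ev1: "A *\<^sub>v v1 = e \<cdot>\<^sub>v v1" unfolding v1_def using A v ev
    by (simp add: mult_mat_vec smult_smult_assoc mult.commute)
  from unitary_ext[OF v1 v11] obtain W where W: "W \<in> carrier_mat ?n ?n"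
    and WW: "adj W * W = 1\<^sub>m ?n" and col0: "col W 0 = v1" by auto
  have WW': "W * adj W = 1\<^sub>m ?n" using mat_mult_left_right_inverse[OF adj_carrier[OF W] W WW] .
  define A' where "A' = adj W * A * W"
  have A': "A' \<in> carrier_mat ?n ?n" unfolding A'_def using W A by (metis adj_carrier mult_carrier_mat)
  have hA': "adj A' = A'" unfolding A'_def
    using W A h by (simp add: adj_mult[of _ ?n ?n _ ?n] assoc_mult_mat[of _ ?n ?n _ ?n _ ?n])
  have A'col: "\<And>i. i < ?n \<Longrightarrow> A' $$ (i,0) = (if i = 0 then e else 0)"
  proof -
    fix i assume i: "i < ?n"
    have "A' $$ (i,0) = (adj W * (A * W)) $$ (i,0)" unfolding A'_def using W A
      by (simp add: assoc_mult_mat[of _ ?n ?n _ ?n _ ?n])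
    also have "\<dots> = row (adj W) i \<bullet> col (A * W) 0" using W A i by simp
    also have "col (A * W) 0 = A *\<^sub>v v1" using col_mult2[OF A W, of 0] col0 by simp
    also have "\<dots> = e \<cdot>\<^sub>v col W 0" using ev1 col0 by simp
    also have "row (adj W) i \<bullet> (e \<cdot>\<^sub>v col W 0) = e * (row (adj W) i \<bullet> col W 0)"
      using W i by (simp add: scalar_prod_smult_distrib[of _ ?n])
    also have "row (adj W) i \<bullet> col W 0 = (adj W * W) $$ (i,0)" using W i by simp
    also have "\<dots> = (if i = 0 then 1 else 0)" using WW i by simp
    finally show "A' $$ (i,0) = (if i = 0 then e else 0)" by simp
  qed
  have A'row: "\<And>j. j < ?n \<Longrightarrow> A' $$ (0,j) = (if j = 0 then e else 0)"
  proof -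
    fix j assume j: "j < ?n"
    have "A' $$ (0,j) = adj A' $$ (0,j)" using hA' by simp
    also have "\<dots> = cnj (A' $$ (j,0))" using A' j by simp
    finally show "A' $$ (0,j) = (if j = 0 then e else 0)" using A'col[OF j] ereal by simp
  qed
  define A3 where "A3 = mat m m (\<lambda>(i,j). A' $$ (Suc i, Suc j))"
  have A3: "A3 \<in> carrier_mat m m" unfolding A3_def by simp
  have hA3: "adj A3 = A3"
  proof (rule eq_matI)
    fix i j assume "i < dim_row A3" "j < dim_col A3"
    hence i: "i < m" and j: "j < m" using A3 by auto
    have "adj A3 $$ (i,j) = cnj (A' $$ (Suc j, Suc i))" using i j by (simp add: A3_def)
    also have "\<dots> = adj A' $$ (Suc i, Suc j)" using i j A' by simp
    also have "\<dots> = A3 $$ (i,j)" using hA' i j by (simp add: A3_def)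
    finally show "adj A3 $$ (i,j) = A3 $$ (i,j)" .
  qed (use A3 in auto)
  from Suc.IH[OF A3 hA3] obtain U3 d3 where U3: "U3 \<in> carrier_mat m m"
    and UU3: "adj U3 * U3 = 1\<^sub>m m" and AU3: "A3 * U3 = U3 * diagm m (\<lambda>i. complex_of_real (d3 i))"
    by auto
  define U' where "U' = mat ?n ?n (\<lambda>(i,j). if i = 0 then (if j = 0 then 1 else 0)
     else if j = 0 then 0 else U3 $$ (i - 1, j - 1))"
  have U': "U' \<in> carrier_mat ?n ?n" unfolding U'_def by simp
  define d where "d = (\<lambda>i. if i = 0 then er else d3 (i - 1))"
  have "adj U' * U' = 1\<^sub>m ?n"
  proof (rule eq_matI)
    fix i j assume "i < dim_row (1\<^sub>m ?n)" "j < dim_col (1\<^sub>m ?n)"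
    hence i: "i < ?n" and j: "j < ?n" by auto
    have "(adj U' * U') $$ (i,j) = (\<Sum>l<?n. cnj (U' $$ (l,i)) * U' $$ (l,j))"
      using U' i j by (simp add: mult_entry[OF adj_carrier[OF U'] U' i j])
    also have "\<dots> = cnj (U' $$ (0,i)) * U' $$ (0,j) + (\<Sum>l<m. cnj (U' $$ (Suc l,i)) * U' $$ (Suc l,j))"
      by (rule sum.lessThan_Suc_shift)
    also have "\<dots> = 1\<^sub>m ?n $$ (i,j)"
    proof (cases i)
      case 0 thus ?thesis using i j by (simp add: U'_def)
    next
      case (Suc i')
      show ?thesis
      proof (cases j)
        case 0 thus ?thesis using i j Suc by (simp add: U'_def)
      next
        case (Suc j')
        have ii: "i' < m" and jj: "j' < m" using i j \<open>i = Suc i'\<close> Suc by auto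
        have "(\<Sum>l<m. cnj (U' $$ (Suc l,i)) * U' $$ (Suc l,j)) = (\<Sum>l<m. cnj (U3 $$ (l,i')) * U3 $$ (l,j'))"
          using i j \<open>i = Suc i'\<close> Suc by (auto simp: U'_def intro!: sum.cong)
        also have "\<dots> = (adj U3 * U3) $$ (i',j')"
          by (subst mult_entry[OF adj_carrier[OF U3] U3 ii jj], rule sum.cong, use U3 ii jj in auto)
        finally show ?thesis using UU3 i j \<open>i = Suc i'\<close> Suc by (simp add: U'_def)
      qed
    qed
    finally show "(adj U' * U') $$ (i,j) = 1\<^sub>m ?n $$ (i,j)" .
  qed (use U' in auto)
  hence UU: "adj (W * U') * (W * U') = 1\<^sub>m ?n"
    using W U' WW by (simp add: adj_mult[OF W U'] assoc_mult_mat[of _ ?n ?n _ ?n _ ?n]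
        assoc_mult_mat[of "adj W" ?n ?n W ?n U' ?n, symmetric])
  have A'U': "A' * U' = U' * diagm ?n (\<lambda>i. complex_of_real (d i))"
  proof (rule eq_matI)
    fix i j assume "i < dim_row (U' * diagm ?n (\<lambda>i. complex_of_real (d i)))"
        "j < dim_col (U' * diagm ?n (\<lambda>i. complex_of_real (d i)))"
    hence i: "i < ?n" and j: "j < ?n" using U' by auto
    have r: "(U' * diagm ?n (\<lambda>i. complex_of_real (d i))) $$ (i,j) = U' $$ (i,j) * d j"
      by (rule mult_diagm[OF U' i j])
    have "(A' * U') $$ (i,j) = (\<Sum>l<?n. A' $$ (i,l) * U' $$ (l,j))"
      by (rule mult_entry[OF A' U' i j])
    also have "\<dots> = A' $$ (i,0) * U' $$ (0,j) + (\<Sum>l<m. A' $$ (i,Suc l) * U' $$ (Suc l,j))"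
      by (rule sum.lessThan_Suc_shift)
    also have "\<dots> = U' $$ (i,j) * d j"
    proof (cases i)
      case 0
      have "(\<Sum>l<m. A' $$ (i,Suc l) * U' $$ (Suc l,j)) = 0"
        using 0 A'row by (auto intro!: sum.neutral)
      thus ?thesis using 0 j A'row[of 0] by (simp add: U'_def d_def e_er)
    next
      case (Suc i')
      show ?thesis
      proof (cases j)
        case 0
        have "(\<Sum>l<m. A' $$ (i,Suc l) * U' $$ (Suc l,j)) = 0"
          using 0 by (auto simp: U'_def intro!: sum.neutral)
        thus ?thesis using 0 i \<open>i = Suc i'\<close> A'col[OF i] by (simp add: U'_def)
      next
        case (Suc j')
        have i': "i' < m" and j': "j' < m" using i j \<open>i = Suc i'\<close> Suc by auto
        have "(\<Sum>l<m. A' $$ (i,Suc l) * U' $$ (Suc l,j)) = (\<Sum>l<m. A3 $$ (i',l) * U3 $$ (l,j'))"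
          using i' j' \<open>i = Suc i'\<close> Suc by (auto simp: U'_def A3_def intro!: sum.cong)
        also have "\<dots> = (A3 * U3) $$ (i',j')" by (rule mult_entry[OF A3 U3 i' j', symmetric])
        also have "\<dots> = U3 $$ (i',j') * d3 j'" unfolding AU3 by (rule mult_diagm[OF U3 i' j'])
        finally show ?thesis using i' j' \<open>i = Suc i'\<close> Suc A'col[OF i]
          by (simp add: U'_def d_def)
      qed
    qed
    finally show "(A' * U') $$ (i,j) = (U' * diagm ?n (\<lambda>i. complex_of_real (d i))) $$ (i,j)"
      using r by simp
  qed (use U' A' in auto)
  have AW: "A * W = W * A'"
  proof -
    have a1: "adj W * A \<in> carrier_mat ?n ?n" using W A by (metis adj_carrier mult_carrier_mat)
    have "W * A' = W * ((adj W * A) * W)" unfolding A'_def ..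
    also have "\<dots> = (W * (adj W * A)) * W" by (simp add: assoc_mult_mat[OF W a1 W])
    also have "W * (adj W * A) = (W * adj W) * A" using assoc_mult_mat[OF W adj_carrier[OF W] A] by simp
    also have "\<dots> = A" using WW' A by simp
    finally show ?thesis by simp
  qed
  have "A * (W * U') = W * U' * diagm ?n (\<lambda>i. complex_of_real (d i))"
  proof -
    have "A * (W * U') = (A * W) * U'" using A W U' by (simp add: assoc_mult_mat[of _ ?n ?n _ ?n _ ?n])
    also have "\<dots> = W * (A' * U')" unfolding AW using W A' U' by (simp add: assoc_mult_mat[of _ ?n ?n _ ?n _ ?n])
    also have "\<dots> = W * U' * diagm ?n (\<lambda>i. complex_of_real (d i))" unfolding A'U'
      using W U' by (simp add: assoc_mult_mat[of _ ?n ?n _ ?n _ ?n])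
    finally show ?thesis .
  qed
  moreover have "W * U' \<in> carrier_mat ?n ?n" using W U' by (metis mult_carrier_mat)
  ultimately show ?case using UU by blast
qed

lemma mult_sq[simp]: "A \<in> carrier_mat n n \<Longrightarrow> B \<in> carrier_mat n n \<Longrightarrow> A * B \<in> carrier_mat n n"
  by (metis mult_carrier_mat)

lemma col_carr[simp]: "U \<in> carrier_mat n m \<Longrightarrow> col U i \<in> carrier_vec n" by auto
lemma mv_carr[simp]: "A \<in> carrier_mat n m \<Longrightarrow> v \<in> carrier_vec m \<Longrightarrow> A *\<^sub>v v \<in> carrier_vec n" by auto
lemma minus_carr[simp]: "A \<in> carrier_mat n m \<Longrightarrow> B \<in> carrier_mat n m \<Longrightarrow> A - B \<in> carrier_mat n m" by auto
lemma plus_carr[simp]: "A \<in> carrier_mat n m \<Longrightarrow> B \<in> carrier_mat n m \<Longrightarrow> A + B \<in> carrier_mat n m" by auto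

lemma mv_zero[simp]: "R \<in> carrier_mat n m \<Longrightarrow> R *\<^sub>v 0\<^sub>v m = 0\<^sub>v n"
  by (rule eq_vecI, auto simp: scalar_prod_def)

lemma pos_gram: assumes C: "C \<in> carrier_mat n m" shows "positive_op n (C * adj C)"
  unfolding positive_op_def
proof (intro conjI ballI)
  show "C * adj C \<in> carrier_mat n n" using C by (metis adj_carrier mult_carrier_mat)
  fix v :: "complex vec" assume v: "v \<in> carrier_vec n"
  have "qform n (C * adj C) v = ip v (C *\<^sub>v (adj C *\<^sub>v v))"
    using C v by (simp add: qform_ip[of _ n] assoc_mult_mat_vec[of _ n m _ n] mult_carrier_mat[of _ n m _ n])
  also have "\<dots> = ip (adj C *\<^sub>v v) (adj C *\<^sub>v v)"
    using ip_mult[OF C v mv_carr[OF adj_carrier[OF C] v]] C v by simp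
  finally show "Im (qform n (C * adj C) v) = 0" "Re (qform n (C * adj C) v) \<ge> 0"
    using ip_self_ge0 by auto
qed

lemma diagm_mult: "diagm n f * diagm n g = diagm n (\<lambda>i. f i * g i)"
proof (rule eq_matI)
  fix i j assume "i < dim_row (diagm n (\<lambda>i. f i * g i))" "j < dim_col (diagm n (\<lambda>i. f i * g i))"
  hence i: "i < n" and j: "j < n" by auto
  show "(diagm n f * diagm n g) $$ (i, j) = diagm n (\<lambda>i. f i * g i) $$ (i, j)"
    unfolding mult_diagm[OF diagm_carrier i j] using i j by (simp add: diagm_def)
qed auto

lemma adj_diagm: "adj (diagm n f) = diagm n (\<lambda>i. cnj (f i))"
  by (rule eq_matI, auto simp: diagm_def)

lemma spectral_decomp: assumes A: "A \<in> carrier_mat n n" and h: "adj A = A"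
  shows "\<exists>U (d::nat\<Rightarrow>real). U \<in> carrier_mat n n \<and> adj U * U = 1\<^sub>m n \<and> U * adj U = 1\<^sub>m n \<and>
    A * U = U * diagm n (\<lambda>i. complex_of_real (d i)) \<and>
    A = U * diagm n (\<lambda>i. complex_of_real (d i)) * adj U"
proof -
  from spectral[OF A h] obtain U d where U: "U \<in> carrier_mat n n" and UU: "adj U * U = 1\<^sub>m n"
    and AU: "A * U = U * diagm n (\<lambda>i. complex_of_real (d i))" by auto
  have UU': "U * adj U = 1\<^sub>m n" by (rule mat_mult_left_right_inverse[OF adj_carrier[OF U] U UU])
  have "A = A * (U * adj U)" using UU' A by simp
  also have "\<dots> = (A * U) * adj U" using A U by (simp add: assoc_mult_mat[of _ n n _ n _ n])
  finally have "A = U * diagm n (\<lambda>i. complex_of_real (d i)) * adj U" unfolding AU .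
  thus ?thesis using U UU UU' AU by blast
qed

lemma col_ip: assumes U: "U \<in> carrier_mat n n" and UU: "adj U * U = 1\<^sub>m n" and i: "i < n" and j: "j < n"
  shows "ip (col U i) (col U j) = (if i = j then 1 else 0)"
proof -
  have "ip (col U i) (col U j) = (adj U * U) $$ (i,j)"
    using U i j by (auto simp: mult_entry[OF adj_carrier[OF U] U i j] ip_def intro!: sum.cong)
  thus ?thesis using UU i j by simp
qed

lemma eig_col: assumes A: "A \<in> carrier_mat n n" and U: "U \<in> carrier_mat n n" and i: "i < n"
  and AU: "A * U = U * diagm n f"
  shows "A *\<^sub>v col U i = f i \<cdot>\<^sub>v col U i"
proof -
  have "A *\<^sub>v col U i = col (A * U) i" using col_mult2[OF A U i] by simp
  also have "\<dots> = col (U * diagm n f) i" unfolding AU ..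
  also have "\<dots> = f i \<cdot>\<^sub>v col U i"
    by (rule eq_vecI, insert U i, auto simp: mult_diagm[OF U] mult.commute simp del: index_mult_mat(1))
  finally show ?thesis .
qed

lemma psd_eig_nonneg: assumes P: "positive_op n A" and U: "U \<in> carrier_mat n n"
  and UU: "adj U * U = 1\<^sub>m n" and AU: "A * U = U * diagm n (\<lambda>i. complex_of_real (d i))" and i: "i < n"
  shows "d i \<ge> 0"
proof -
  have A: "A \<in> carrier_mat n n" using P by (simp add: positive_op_def)
  have c: "col U i \<in> carrier_vec n" using U by simp
  have "qform n A (col U i) = ip (col U i) (complex_of_real (d i) \<cdot>\<^sub>v col U i)"
    using qform_ip[OF A c] eig_col[OF A U i AU] by simp
  also have "\<dots> = complex_of_real (d i)" using col_ip[OF U UU i i] by (simp add: ip_smult_right)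
  finally show ?thesis using P c unfolding positive_op_def by force
qed

lemma sqrt_exists: assumes P: "positive_op n A" shows "\<exists>B. positive_op n B \<and> B * B = A"
proof -
  have A: "A \<in> carrier_mat n n" using P by (simp add: positive_op_def)
  from spectral_decomp[OF A pos_herm[OF P]] obtain U d where U: "U \<in> carrier_mat n n"
    and UU: "adj U * U = 1\<^sub>m n" and UU': "U * adj U = 1\<^sub>m n"
    and AU: "A * U = U * diagm n (\<lambda>i. complex_of_real (d i))"
    and Adec: "A = U * diagm n (\<lambda>i. complex_of_real (d i)) * adj U" by blast
  have dnn: "\<And>i. i < n \<Longrightarrow> d i \<ge> 0" using psd_eig_nonneg[OF P U UU AU] by blast
  define Q where "Q = diagm n (\<lambda>i. complex_of_real (sqrt (sqrt (d i))))"
  define C where "C = U * Q"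
  have Q: "Q \<in> carrier_mat n n" unfolding Q_def by simp
  have C: "C \<in> carrier_mat n n" unfolding C_def using U Q by simp
  have aQ: "adj Q = Q" unfolding Q_def adj_diagm by simp
  have QQ: "Q * Q = diagm n (\<lambda>i. complex_of_real (sqrt (d i)))"
    unfolding Q_def diagm_mult
    by (rule eq_matI, auto simp: diagm_def dnn of_real_mult[symmetric] simp del: of_real_mult)
  have QQQQ: "(Q * Q) * (Q * Q) = diagm n (\<lambda>i. complex_of_real (d i))"
    unfolding QQ diagm_mult
    by (rule eq_matI, auto simp: diagm_def dnn of_real_mult[symmetric] simp del: of_real_mult)
  have aC: "adj C = Q * adj U" unfolding C_def using U Q aQ by (simp add: adj_mult[OF U Q])
  have CC: "adj C * C = Q * Q"
  proof -
    have "adj C * C = (Q * adj U) * (U * Q)" using aC C_def by simp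
    also have "\<dots> = Q * (adj U * U) * Q" using U Q
      by (simp add: assoc_mult_mat[of _ n n _ n _ n])
    finally have "adj C * C = Q * (adj U * U) * Q" .
    thus ?thesis using UU Q by simp
  qed
  define B where "B = C * adj C"
  have "B * B = C * (adj C * C) * adj C" unfolding B_def using C
    by (simp add: assoc_mult_mat[of _ n n _ n _ n])
  also have "\<dots> = (U * Q) * (Q * Q) * (Q * adj U)" unfolding CC using aC C_def by simp
  also have "\<dots> = U * ((Q * Q) * (Q * Q)) * adj U" using U Q
    by (simp add: assoc_mult_mat[of _ n n _ n _ n])
  also have "\<dots> = A" unfolding QQQQ Adec ..
  finally show ?thesis using pos_gram[OF C] unfolding B_def by blast
qed

lemma psd_kernel: assumes P: "positive_op n A" and v: "v \<in> carrier_vec n" and q: "qform n A v = 0"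
  shows "A *\<^sub>v v = 0\<^sub>v n"
proof -
  have A: "A \<in> carrier_mat n n" using P by (simp add: positive_op_def)
  from sqrt_exists[OF P] obtain R where R: "positive_op n R" and RR: "R * R = A" by auto
  have Rc: "R \<in> carrier_mat n n" using R by (simp add: positive_op_def)
  have hR: "adj R = R" using pos_herm[OF R] .
  have "0 = ip v (R *\<^sub>v (R *\<^sub>v v))" using q qform_ip[OF A v] RR assoc_mult_mat_vec[OF Rc Rc v] by simp
  also have "\<dots> = ip (R *\<^sub>v v) (R *\<^sub>v v)" using ip_mult[OF Rc v, of "R *\<^sub>v v"] hR Rc v by simp
  finally have "R *\<^sub>v v = 0\<^sub>v n" using ip_self_zero[OF mv_carr[OF Rc v]] Rc by simp
  thus ?thesis using RR assoc_mult_mat_vec[OF Rc Rc v] Rc by simp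
qed

lemma sqrt_unique: assumes B: "positive_op n B" and C: "positive_op n C" and BC: "B * B = C * C"
  shows "B = C"
proof -
  have Bc: "B \<in> carrier_mat n n" and Cc: "C \<in> carrier_mat n n" using B C by (auto simp: positive_op_def)
  have hB: "adj B = B" and hC: "adj C = C" using pos_herm B C by auto
  define H where "H = B - C"
  have Hc: "H \<in> carrier_mat n n" unfolding H_def using Bc Cc by simp
  have hH: "adj H = H" unfolding H_def using hB hC Bc Cc
    by (intro eq_matI, auto, metis adj_index carrier_matD complex_cnj_diff)
  from spectral_decomp[OF Hc hH] obtain U l where U: "U \<in> carrier_mat n n"
    and UU: "adj U * U = 1\<^sub>m n" and UU': "U * adj U = 1\<^sub>m n"
    and HU: "H * U = U * diagm n (\<lambda>i. complex_of_real (l i))" by blast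
  have l0: "l i = 0" if i: "i < n" for i
  proof (rule ccontr)
    assume ln: "l i \<noteq> 0"
    let ?w = "col U i"
    have w: "?w \<in> carrier_vec n" using U by simp
    have Hw: "H *\<^sub>v ?w = complex_of_real (l i) \<cdot>\<^sub>v ?w" using eig_col[OF Hc U i HU] .
    have ww: "ip ?w ?w = 1" using col_ip[OF U UU i i] by simp
    have Hw': "H *\<^sub>v ?w = B *\<^sub>v ?w - C *\<^sub>v ?w" unfolding H_def using Bc Cc w
      by (simp add: minus_mult_distrib_mat_vec)
    have Bw: "B *\<^sub>v ?w \<in> carrier_vec n" "C *\<^sub>v ?w \<in> carrier_vec n" using Bc Cc w by auto
    have "0 = ip ?w (B *\<^sub>v (B *\<^sub>v ?w)) - ip ?w (C *\<^sub>v (C *\<^sub>v ?w))"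
      using BC assoc_mult_mat_vec[OF Bc Bc w] assoc_mult_mat_vec[OF Cc Cc w] by simp
    also have "ip ?w (B *\<^sub>v (B *\<^sub>v ?w)) = ip ?w (B *\<^sub>v (H *\<^sub>v ?w)) + ip ?w (B *\<^sub>v (C *\<^sub>v ?w))"
      using Bc Bw w by (simp add: Hw' mult_minus_distrib_mat_vec ip_def sum_subtractf algebra_simps)
    also have "ip ?w (B *\<^sub>v (C *\<^sub>v ?w)) = ip (B *\<^sub>v ?w) (C *\<^sub>v ?w)"
      using ip_mult[OF Bc w Bw(2)] hB by simp
    also have "ip ?w (C *\<^sub>v (C *\<^sub>v ?w)) = ip (C *\<^sub>v ?w) (C *\<^sub>v ?w)"
      using ip_mult[OF Cc w Bw(2)] hC by simp
    finally have "0 = ip ?w (B *\<^sub>v (H *\<^sub>v ?w)) + ip (H *\<^sub>v ?w) (C *\<^sub>v ?w)"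
      using Bw unfolding Hw' by (simp add: ip_add_left ip_def sum_subtractf algebra_simps)
    also have "\<dots> = complex_of_real (l i) * (ip ?w (B *\<^sub>v ?w) + ip ?w (C *\<^sub>v ?w))"
      unfolding Hw using Bc Cc w U
      by (simp add: mult_mat_vec ip_smult_right ip_smult_left[of _ "C *\<^sub>v ?w"] algebra_simps)
    finally have "ip ?w (B *\<^sub>v ?w) + ip ?w (C *\<^sub>v ?w) = 0" using ln by simp
    moreover have "Re (ip ?w (B *\<^sub>v ?w)) \<ge> 0" "Re (ip ?w (C *\<^sub>v ?w)) \<ge> 0"
      "Im (ip ?w (B *\<^sub>v ?w)) = 0" "Im (ip ?w (C *\<^sub>v ?w)) = 0"
      using B C w qform_ip[OF Bc w] qform_ip[OF Cc w] unfolding positive_op_def by auto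
    ultimately have "qform n B ?w = 0" "qform n C ?w = 0"
      using qform_ip[OF Bc w] qform_ip[OF Cc w] by (auto simp: complex_eq_iff)
    hence "B *\<^sub>v ?w = 0\<^sub>v n" "C *\<^sub>v ?w = 0\<^sub>v n" using psd_kernel B C w by auto
    hence "complex_of_real (l i) \<cdot>\<^sub>v ?w = 0\<^sub>v n" using Hw Hw' by simp
    hence "ip ?w (complex_of_real (l i) \<cdot>\<^sub>v ?w) = 0" by (simp add: ip_def)
    thus False using ww ln by (simp add: ip_smult_right)
  qed
  have "H * U = 0\<^sub>m n n"
    unfolding HU by (rule eq_matI, insert U l0, auto simp: mult_diagm[OF U] simp del: index_mult_mat(1))
  hence "H = 0\<^sub>m n n * adj U"
    using UU' Hc U by (metis assoc_mult_mat adj_carrier right_mult_one_mat)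
  hence "H = 0\<^sub>m n n" using U by simp
  show ?thesis
  proof (rule eq_matI)
    fix i j assume "i < dim_row C" "j < dim_col C"
    hence i: "i < n" and j: "j < n" using Cc by auto
    have "H $$ (i,j) = 0" using \<open>H = 0\<^sub>m n n\<close> i j by simp
    thus "B $$ (i,j) = C $$ (i,j)" unfolding H_def using Bc Cc i j by simp
  qed (use Bc Cc in auto)
qed

lemma sum_split: "(\<Sum>p<(a::nat)*b. f p) = (\<Sum>i<a. \<Sum>c<b. f (i*b + c))"
proof (induction a)
  case 0 thus ?case by simp
next
  case (Suc a)
  have "{..<Suc a * b} = {..<a*b} \<union> {a*b..<a*b+b}" by auto
  hence "(\<Sum>p<Suc a*b. f p) = (\<Sum>p<a*b. f p) + (\<Sum>p\<in>{a*b..<a*b+b}. f p)"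
    by (simp add: sum.union_disjoint ivl_disj_int)
  also have "(\<Sum>p\<in>{a*b..<a*b+b}. f p) = (\<Sum>c<b. f (a*b + c))"
  proof -
    have "(\<Sum>p\<in>{a*b..<a*b+b}. f p) = (\<Sum>p\<in>{0+a*b..<b+a*b}. f p)" by (simp add: add.commute)
    also have "\<dots> = (\<Sum>c\<in>{0..<b}. f (c + a*b))" by (rule sum.shift_bounds_nat_ivl)
    finally show ?thesis by (simp add: lessThan_atLeast0 add.commute)
  qed
  finally show ?case using Suc by simp
qed

lemma kron_carrier[simp]: "A \<in> carrier_mat a a \<Longrightarrow> B \<in> carrier_mat b b \<Longrightarrow> kron A B \<in> carrier_mat (a*b) (a*b)"
  by (simp add: kron_def)

lemma idx_lt: "i < (a::nat) \<Longrightarrow> c < b \<Longrightarrow> i*b + c < a*b"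
proof -
  assume i: "i < a" and c: "c < b"
  have "i*b + c < i*b + b" using c by simp
  also have "\<dots> = Suc i * b" by simp
  also have "\<dots> \<le> a*b" using i by (intro mult_le_mono1, simp)
  finally show ?thesis .
qed

lemma idx_div[simp]: "c < (b::nat) \<Longrightarrow> (i*b + c) div b = i"
  by (simp add: add.commute)
lemma idx_mod[simp]: "c < (b::nat) \<Longrightarrow> (i*b + c) mod b = c"
  by (simp add: add.commute)

lemma kron_entry: "A \<in> carrier_mat a a \<Longrightarrow> B \<in> carrier_mat b b \<Longrightarrow> i < a \<Longrightarrow> j < a \<Longrightarrow> c < b \<Longrightarrow> e < b \<Longrightarrow>
  kron A B $$ (i*b + c, j*b + e) = A $$ (i,j) * B $$ (c,e)"
  by (simp add: kron_def idx_lt)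

lemma ptrace_carrier[simp]: "ptrace2 a b M \<in> carrier_mat a a" by (simp add: ptrace2_def)

lemma ptrace_entry: assumes s: "\<sigma> \<in> carrier_mat (dS*dA) (dS*dA)" and Z: "Z \<in> carrier_mat dA dA"
  and i: "i < dS" and j: "j < dS"
  shows "ptrace2 dS dA (kron (1\<^sub>m dS) Z * \<sigma>) $$ (i,j) =
    (\<Sum>b<dA. \<Sum>c<dA. Z $$ (b,c) * \<sigma> $$ (i*dA+c, j*dA+b))"
proof -
  have K: "kron (1\<^sub>m dS) Z \<in> carrier_mat (dS*dA) (dS*dA)" using Z by simp
  have "ptrace2 dS dA (kron (1\<^sub>m dS) Z * \<sigma>) $$ (i,j) =
      (\<Sum>b<dA. (kron (1\<^sub>m dS) Z * \<sigma>) $$ (i*dA+b, j*dA+b))"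
    using i j by (simp add: ptrace2_def)
  also have "\<dots> = (\<Sum>b<dA. \<Sum>r<dS*dA. kron (1\<^sub>m dS) Z $$ (i*dA+b, r) * \<sigma> $$ (r, j*dA+b))"
    using i j by (intro sum.cong refl, simp add: mult_entry[OF K s] idx_lt)
  also have "\<dots> = (\<Sum>b<dA. \<Sum>i'<dS. \<Sum>c<dA. kron (1\<^sub>m dS) Z $$ (i*dA+b, i'*dA+c) * \<sigma> $$ (i'*dA+c, j*dA+b))"
    by (simp only: sum_split)
  also have "\<dots> = (\<Sum>b<dA. \<Sum>i'<dS. \<Sum>c<dA. (if i = i' then Z $$ (b,c) * \<sigma> $$ (i*dA+c, j*dA+b) else 0))"
    using i Z by (intro sum.cong refl, simp add: kron_entry[OF one_carrier_mat Z])
  also have "\<dots> = (\<Sum>b<dA. \<Sum>c<dA. Z $$ (b,c) * \<sigma> $$ (i*dA+c, j*dA+b))"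
  proof (rule sum.cong[OF refl])
    fix b assume "b \<in> {..<dA}"
    have "(\<Sum>i'<dS. \<Sum>c<dA. (if i = i' then Z $$ (b,c) * \<sigma> $$ (i*dA+c, j*dA+b) else 0)) =
        (\<Sum>i'<dS. (if i = i' then (\<Sum>c<dA. Z $$ (b,c) * \<sigma> $$ (i*dA+c, j*dA+b)) else 0))"
      by (intro sum.cong refl, auto)
    also have "\<dots> = (\<Sum>c<dA. Z $$ (b,c) * \<sigma> $$ (i*dA+c, j*dA+b))" using i by simp
    finally show "(\<Sum>i'<dS. \<Sum>c<dA. (if i = i' then Z $$ (b,c) * \<sigma> $$ (i*dA+c, j*dA+b) else 0)) =
        (\<Sum>c<dA. Z $$ (b,c) * \<sigma> $$ (i*dA+c, j*dA+b))" .
  qed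
  finally show ?thesis .
qed

definition wv :: "nat \<Rightarrow> nat \<Rightarrow> complex vec \<Rightarrow> complex mat \<Rightarrow> nat \<Rightarrow> complex vec" where
  "wv dS dA u R e = vec (dS*dA) (\<lambda>p. u $ (p div dA) * R $$ (p mod dA, e))"

lemma qform_ptrace: assumes s: "\<sigma> \<in> carrier_mat (dS*dA) (dS*dA)" and Z: "Z \<in> carrier_mat dA dA"
  and R: "R \<in> carrier_mat dA dA" and RR: "R * adj R = Z" and u: "u \<in> carrier_vec dS"
  shows "qform dS (ptrace2 dS dA (kron (1\<^sub>m dS) Z * \<sigma>)) u = (\<Sum>e<dA. qform (dS*dA) \<sigma> (wv dS dA u R e))"
proof -
  define T where "T = (\<lambda>i j b c e. cnj (u$i) * R$$(b,e) * cnj (R$$(c,e)) * \<sigma>$$(i*dA+c, j*dA+b) * u$j)"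
  have Zbc: "\<And>b c. b < dA \<Longrightarrow> c < dA \<Longrightarrow> Z $$ (b,c) = (\<Sum>e<dA. R$$(b,e) * cnj (R$$(c,e)))"
    using R by (subst RR[symmetric], subst mult_entry[OF R adj_carrier[OF R]], auto intro!: sum.cong)
  have "qform dS (ptrace2 dS dA (kron (1\<^sub>m dS) Z * \<sigma>)) u =
     (\<Sum>i<dS. \<Sum>j<dS. cnj (u$i) * (\<Sum>b<dA. \<Sum>c<dA. Z $$ (b,c) * \<sigma> $$ (i*dA+c, j*dA+b)) * u$j)"
    by (simp add: qform_def ptrace_entry[OF s Z])
  also have "\<dots> = (\<Sum>i<dS. \<Sum>j<dS. \<Sum>b<dA. \<Sum>c<dA. \<Sum>e<dA. T i j b c e)"
    unfolding T_def
    by (intro sum.cong refl, simp add: Zbc sum_distrib_left sum_distrib_right mult_ac)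
  finally have L: "qform dS (ptrace2 dS dA (kron (1\<^sub>m dS) Z * \<sigma>)) u =
     (\<Sum>i<dS. \<Sum>j<dS. \<Sum>b<dA. \<Sum>c<dA. \<Sum>e<dA. T i j b c e)" .
  have "(\<Sum>e<dA. qform (dS*dA) \<sigma> (wv dS dA u R e)) =
     (\<Sum>e<dA. \<Sum>p<dS*dA. \<Sum>q<dS*dA. cnj (u $ (p div dA) * R $$ (p mod dA, e)) * \<sigma> $$ (p,q) *
         (u $ (q div dA) * R $$ (q mod dA, e)))"
    by (simp add: qform_def wv_def)
  also have "\<dots> = (\<Sum>e<dA. \<Sum>i<dS. \<Sum>c<dA. \<Sum>j<dS. \<Sum>b<dA. T i j b c e)"
    unfolding sum_split T_def by (intro sum.cong refl, simp add: mult_ac)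
  also have "\<dots> = (\<Sum>i<dS. \<Sum>e<dA. \<Sum>c<dA. \<Sum>j<dS. \<Sum>b<dA. T i j b c e)" by (rule sum.swap)
  also have "\<dots> = (\<Sum>i<dS. \<Sum>c<dA. \<Sum>e<dA. \<Sum>j<dS. \<Sum>b<dA. T i j b c e)"
    by (rule sum.cong[OF refl], rule sum.swap)
  also have "\<dots> = (\<Sum>i<dS. \<Sum>c<dA. \<Sum>j<dS. \<Sum>e<dA. \<Sum>b<dA. T i j b c e)"
    by (rule sum.cong[OF refl], rule sum.cong[OF refl], rule sum.swap)
  also have "\<dots> = (\<Sum>i<dS. \<Sum>c<dA. \<Sum>j<dS. \<Sum>b<dA. \<Sum>e<dA. T i j b c e)"
    by (rule sum.cong[OF refl], rule sum.cong[OF refl], rule sum.cong[OF refl], rule sum.swap)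
  also have "\<dots> = (\<Sum>i<dS. \<Sum>j<dS. \<Sum>c<dA. \<Sum>b<dA. \<Sum>e<dA. T i j b c e)"
    by (rule sum.cong[OF refl], rule sum.swap)
  also have "\<dots> = (\<Sum>i<dS. \<Sum>j<dS. \<Sum>b<dA. \<Sum>c<dA. \<Sum>e<dA. T i j b c e)"
    by (rule sum.cong[OF refl], rule sum.cong[OF refl], rule sum.swap)
  finally show ?thesis using L by simp
qed

lemma psd_sqrt_prop: assumes P: "positive_op d A"
  shows "positive_op d (psd_sqrt d A) \<and> psd_sqrt d A * psd_sqrt d A = A"
proof -
  have "\<exists>!B. positive_op d B \<and> B * B = A"
    using sqrt_exists[OF P] sqrt_unique by metis
  thus ?thesis unfolding psd_sqrt_def by (rule theI')
qed

lemma ptrace_dims[simp]: "dim_row (ptrace2 a b M) = a" "dim_col (ptrace2 a b M) = a"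
  by (simp_all add: ptrace2_def)

lemma qform_zero_vec[simp]: "qform d A (0\<^sub>v d) = 0" by (simp add: qform_def)

lemma posdef_pos: "pos_def_op d A \<Longrightarrow> positive_op d A"
  unfolding pos_def_op_def positive_op_def
proof (intro conjI ballI, blast)
  fix v :: "complex vec" assume P: "A \<in> carrier_mat d d \<and>
    (\<forall>v\<in>carrier_vec d. v \<noteq> 0\<^sub>v d \<longrightarrow> Im (qform d A v) = 0 \<and> 0 < Re (qform d A v))" and v: "v \<in> carrier_vec d"
  show "Im (qform d A v) = 0" using P v by (cases "v = 0\<^sub>v d", auto)
  show "0 \<le> Re (qform d A v)" using P v by (cases "v = 0\<^sub>v d", auto simp: order_less_imp_le)
qed

lemma posdef_re_nonneg: "pos_def_op d A \<Longrightarrow> v \<in> carrier_vec d \<Longrightarrow> Re (qform d A v) \<ge> 0 \<and> Im (qform d A v) = 0"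
  using posdef_pos[of d A] unfolding positive_op_def by auto

lemma instr_pos: assumes s: "pos_def_op (dS*dA) \<sigma>" and Z: "positive_op dA Z" and Z0: "Z \<noteq> 0\<^sub>m dA dA"
  and u: "u \<in> carrier_vec dS" and u0: "u \<noteq> 0\<^sub>v dS"
  shows "Re (qform dS (ptrace2 dS dA (kron (1\<^sub>m dS) Z * \<sigma>)) u) > 0"
proof -
  have sc: "\<sigma> \<in> carrier_mat (dS*dA) (dS*dA)" using s by (simp add: pos_def_op_def)
  have Zc: "Z \<in> carrier_mat dA dA" using Z by (simp add: positive_op_def)
  from sqrt_exists[OF Z] obtain R where R: "positive_op dA R" and RR: "R * R = Z" by auto
  have Rc: "R \<in> carrier_mat dA dA" using R by (simp add: positive_op_def)
  have RR': "R * adj R = Z" using RR pos_herm[OF R] by simp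
  have wc: "\<And>e. wv dS dA u R e \<in> carrier_vec (dS*dA)" by (simp add: wv_def)
  have eq: "qform dS (ptrace2 dS dA (kron (1\<^sub>m dS) Z * \<sigma>)) u = (\<Sum>e<dA. qform (dS*dA) \<sigma> (wv dS dA u R e))"
    by (rule qform_ptrace[OF sc Zc Rc RR' u])
  obtain b e where b: "b < dA" and e: "e < dA" and Rbe: "R $$ (b,e) \<noteq> 0"
  proof -
    { assume "\<forall>b<dA. \<forall>e<dA. R $$ (b,e) = 0"
      hence "R = 0\<^sub>m dA dA" using Rc by (intro eq_matI, auto)
      hence "Z = 0\<^sub>m dA dA" using RR by simp
      with Z0 have False by simp }
    thus ?thesis using that by blast
  qed
  obtain i where i: "i < dS" and ui: "u $ i \<noteq> 0"
    using u u0 by (metis carrier_vecD eq_vecI index_zero_vec(1) index_zero_vec(2))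
  have "wv dS dA u R e $ (i*dA + b) = u $ i * R $$ (b,e)" using i b by (simp add: wv_def idx_lt)
  hence "wv dS dA u R e \<noteq> 0\<^sub>v (dS*dA)" using ui Rbe i b idx_lt[OF i b] by auto
  hence pos: "Re (qform (dS*dA) \<sigma> (wv dS dA u R e)) > 0" using s wc unfolding pos_def_op_def by auto
  have "0 < (\<Sum>e<dA. Re (qform (dS*dA) \<sigma> (wv dS dA u R e)))"
    by (rule sum_pos2[of "{..<dA}" e], insert e pos posdef_re_nonneg[OF s wc], auto)
  thus ?thesis unfolding eq by (simp add: Re_sum)
qed

lemma ptrace_zero: assumes s: "\<sigma> \<in> carrier_mat (dS*dA) (dS*dA)"
  shows "ptrace2 dS dA (kron (1\<^sub>m dS) (0\<^sub>m dA dA) * \<sigma>) = 0\<^sub>m dS dS"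
  by (rule eq_matI, auto simp: ptrace_entry[OF s zero_carrier_mat])

definition vblk :: "nat \<Rightarrow> complex vec \<Rightarrow> nat \<Rightarrow> complex vec" where
  "vblk dA v i = vec dA (\<lambda>a. v $ (i*dA + a))"

lemma qform_kron_id: assumes xi: "\<xi> \<in> carrier_mat dA dA"
  shows "qform (dS*dA) (kron (c \<cdot>\<^sub>m 1\<^sub>m dS) \<xi>) v = c * (\<Sum>i<dS. qform dA \<xi> (vblk dA v i))"
proof -
  have K: "\<And>i j a b. i < dS \<Longrightarrow> j < dS \<Longrightarrow> a < dA \<Longrightarrow> b < dA \<Longrightarrow>
      kron (c \<cdot>\<^sub>m 1\<^sub>m dS) \<xi> $$ (i*dA+a, j*dA+b) = (if i = j then c * \<xi> $$ (a,b) else 0)"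
    by (simp add: kron_entry[OF smult_carrier_mat[OF one_carrier_mat] xi])
  have "qform (dS*dA) (kron (c \<cdot>\<^sub>m 1\<^sub>m dS) \<xi>) v =
     (\<Sum>i<dS. \<Sum>a<dA. \<Sum>j<dS. \<Sum>b<dA. cnj (v $ (i*dA+a)) * kron (c \<cdot>\<^sub>m 1\<^sub>m dS) \<xi> $$ (i*dA+a, j*dA+b) * v $ (j*dA+b))"
    by (simp add: qform_def sum_split)
  also have "\<dots> = (\<Sum>i<dS. \<Sum>a<dA. \<Sum>j<dS. (if i = j then (\<Sum>b<dA. cnj (v $ (i*dA+a)) * (c * \<xi> $$ (a,b)) * v $ (j*dA+b)) else 0))"
    by (rule sum.cong[OF refl], rule sum.cong[OF refl], rule sum.cong[OF refl], auto simp: K)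
  also have "\<dots> = (\<Sum>i<dS. \<Sum>a<dA. \<Sum>b<dA. cnj (v $ (i*dA+a)) * (c * \<xi> $$ (a,b)) * v $ (i*dA+b))"
    by (rule sum.cong[OF refl], rule sum.cong[OF refl], simp)
  also have "\<dots> = c * (\<Sum>i<dS. qform dA \<xi> (vblk dA v i))"
    by (simp add: qform_def vblk_def sum_distrib_left mult_ac)
  finally show ?thesis .
qed

lemma mtrace_kron_id: assumes xi: "\<xi> \<in> carrier_mat dA dA"
  shows "mtrace (kron (c \<cdot>\<^sub>m 1\<^sub>m dS) \<xi>) = of_nat dS * c * mtrace \<xi>"
proof -
  have "dim_row (kron (c \<cdot>\<^sub>m 1\<^sub>m dS) \<xi>) = dS * dA" using xi by (simp add: kron_def)
  hence "mtrace (kron (c \<cdot>\<^sub>m 1\<^sub>m dS) \<xi>) = (\<Sum>i<dS. \<Sum>a<dA. kron (c \<cdot>\<^sub>m 1\<^sub>m dS) \<xi> $$ (i*dA+a, i*dA+a))"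
    by (simp add: mtrace_def sum_split)
  also have "\<dots> = (\<Sum>i<dS. \<Sum>a<dA. c * \<xi> $$ (a,a))"
    by (intro sum.cong refl, simp add: kron_entry[OF smult_carrier_mat[OF one_carrier_mat] xi])
  also have "\<dots> = of_nat dS * c * mtrace \<xi>" using xi by (simp add: mtrace_def sum_distrib_left mult.assoc)
  finally show ?thesis .
qed

lemma kron_state: assumes xi: "full_rank_state dA \<xi>" and dS: "dS > 0"
  shows "full_rank_state (dS*dA) (kron ((1 / of_nat dS) \<cdot>\<^sub>m 1\<^sub>m dS) \<xi>)"
proof -
  let ?c = "1 / of_nat dS :: complex"
  let ?K = "kron (?c \<cdot>\<^sub>m 1\<^sub>m dS) \<xi>"
  have xc: "\<xi> \<in> carrier_mat dA dA" and xpd: "pos_def_op dA \<xi>" and tr: "mtrace \<xi> = 1"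
    using xi by (auto simp: full_rank_state_def is_state_def positive_op_def)
  have Kc: "?K \<in> carrier_mat (dS*dA) (dS*dA)" using xc by simp
  have pd: "pos_def_op (dS*dA) ?K"
    unfolding pos_def_op_def
  proof (intro conjI ballI impI Kc)
    fix v :: "complex vec" assume v: "v \<in> carrier_vec (dS*dA)" and v0: "v \<noteq> 0\<^sub>v (dS*dA)"
    obtain p where p: "p < dS*dA" and vp: "v $ p \<noteq> 0"
      using v v0 by (metis carrier_vecD eq_vecI index_zero_vec(1) index_zero_vec(2))
    have dA: "dA > 0" using p by (cases dA, auto)
    define i where "i = p div dA"
    define a where "a = p mod dA"
    have i: "i < dS" using p dA unfolding i_def by (simp add: less_mult_imp_div_less)
    have a: "a < dA" using dA unfolding a_def by simp
    have "p = i*dA + a" unfolding i_def a_def by simp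
    hence "vblk dA v i $ a \<noteq> 0" using vp a by (simp add: vblk_def)
    hence "vblk dA v i \<noteq> 0\<^sub>v dA" using a by auto
    hence posi: "Re (qform dA \<xi> (vblk dA v i)) > 0" using xpd unfolding pos_def_op_def by (auto simp: vblk_def)
    have nn: "\<And>j. Re (qform dA \<xi> (vblk dA v j)) \<ge> 0 \<and> Im (qform dA \<xi> (vblk dA v j)) = 0"
      using posdef_re_nonneg[OF xpd] by (simp add: vblk_def)
    have s1: "0 < (\<Sum>j<dS. Re (qform dA \<xi> (vblk dA v j)))"
      by (rule sum_pos2[of "{..<dS}" i], insert i posi nn, auto)
    have s2: "(\<Sum>j<dS. Im (qform dA \<xi> (vblk dA v j))) = 0" using nn by simp
    have q: "qform (dS*dA) ?K v = of_real (1 / real dS) * (\<Sum>j<dS. qform dA \<xi> (vblk dA v j))"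
      using qform_kron_id[OF xc, of dS ?c v] by simp
    show "Im (qform (dS*dA) ?K v) = 0" unfolding q using s2 by (simp add: Im_sum)
    show "Re (qform (dS*dA) ?K v) > 0" unfolding q using s1 dS by (simp add: Re_sum)
  qed
  have "mtrace ?K = 1" using mtrace_kron_id[OF xc] tr dS by simp
  thus ?thesis using pd posdef_pos[OF pd] unfolding full_rank_state_def is_state_def by simp
qed

lemma block_entry[simp]: "a < n \<Longrightarrow> b < n \<Longrightarrow> block n X P Q $$ (a,b) = X $$ (P*n+a, Q*n+b)"
  by (simp add: block_def)

lemma kraus_cp:
  assumes J: "finite J" and V: "\<And>j. j \<in> J \<Longrightarrow> V j \<in> carrier_mat m n"
    and PhiC: "\<And>M. M \<in> carrier_mat n n \<Longrightarrow> \<Phi> M \<in> carrier_mat m m"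
    and PhiE: "\<And>M s t. M \<in> carrier_mat n n \<Longrightarrow> s < m \<Longrightarrow> t < m \<Longrightarrow>
       \<Phi> M $$ (s,t) = (\<Sum>j\<in>J. \<Sum>a<n. \<Sum>b<n. V j $$ (s,a) * M $$ (a,b) * cnj (V j $$ (t,b)))"
  shows "completely_positive n m \<Phi>"
  unfolding completely_positive_def
proof (intro allI impI)
  fix k X assume XP: "positive_op (k*n) X"
  have Xc: "X \<in> carrier_mat (k*n) (k*n)" using XP by (simp add: positive_op_def)
  have Ac: "ampl k n m \<Phi> X \<in> carrier_mat (k*m) (k*m)" by (simp add: ampl_def)
  define w where "w = (\<lambda>(v::complex vec) j. vec (k*n) (\<lambda>r. \<Sum>s<m. cnj (V j $$ (s, r mod n)) * v $ ((r div n)*m + s)))"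
  have blk: "\<And>P Q. block n X P Q \<in> carrier_mat n n" by (simp add: block_def)
  have key: "qform (k*m) (ampl k n m \<Phi> X) v = (\<Sum>j\<in>J. qform (k*n) X (w v j))" for v
  proof -
    define T where "T = (\<lambda>j P s Q t a b. cnj (v $ (P*m+s)) * V j $$ (s,a) * X $$ (P*n+a, Q*n+b) *
          cnj (V j $$ (t,b)) * v $ (Q*m+t))"
    have "qform (k*m) (ampl k n m \<Phi> X) v =
       (\<Sum>P<k. \<Sum>s<m. \<Sum>Q<k. \<Sum>t<m. cnj (v $ (P*m+s)) * \<Phi> (block n X P Q) $$ (s,t) * v $ (Q*m+t))"
      by (simp add: qform_def sum_split ampl_def idx_lt)
    also have "\<dots> = (\<Sum>P<k. \<Sum>s<m. \<Sum>Q<k. \<Sum>t<m. \<Sum>j\<in>J. \<Sum>a<n. \<Sum>b<n. T j P s Q t a b)"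
      by (intro sum.cong refl, simp add: PhiE[OF blk] T_def sum_distrib_left sum_distrib_right mult_ac)
    also have "\<dots> = (\<Sum>P<k. \<Sum>s<m. \<Sum>Q<k. \<Sum>j\<in>J. \<Sum>t<m. \<Sum>a<n. \<Sum>b<n. T j P s Q t a b)"
      by (rule sum.cong[OF refl], rule sum.cong[OF refl], rule sum.cong[OF refl], rule sum.swap)
    also have "\<dots> = (\<Sum>P<k. \<Sum>s<m. \<Sum>j\<in>J. \<Sum>Q<k. \<Sum>t<m. \<Sum>a<n. \<Sum>b<n. T j P s Q t a b)"
      by (rule sum.cong[OF refl], rule sum.cong[OF refl], rule sum.swap)
    also have "\<dots> = (\<Sum>P<k. \<Sum>j\<in>J. \<Sum>s<m. \<Sum>Q<k. \<Sum>t<m. \<Sum>a<n. \<Sum>b<n. T j P s Q t a b)"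
      by (rule sum.cong[OF refl], rule sum.swap)
    also have "\<dots> = (\<Sum>j\<in>J. \<Sum>P<k. \<Sum>s<m. \<Sum>Q<k. \<Sum>t<m. \<Sum>a<n. \<Sum>b<n. T j P s Q t a b)"
      by (rule sum.swap)
    also have "\<dots> = (\<Sum>j\<in>J. \<Sum>P<k. \<Sum>Q<k. \<Sum>s<m. \<Sum>t<m. \<Sum>a<n. \<Sum>b<n. T j P s Q t a b)"
      by (rule sum.cong[OF refl], rule sum.cong[OF refl], rule sum.swap)
    finally have L: "qform (k*m) (ampl k n m \<Phi> X) v =
       (\<Sum>j\<in>J. \<Sum>P<k. \<Sum>Q<k. \<Sum>s<m. \<Sum>t<m. \<Sum>a<n. \<Sum>b<n. T j P s Q t a b)" .
    have "(\<Sum>j\<in>J. qform (k*n) X (w v j)) =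
       (\<Sum>j\<in>J. \<Sum>P<k. \<Sum>a<n. \<Sum>Q<k. \<Sum>b<n. cnj (\<Sum>s<m. cnj (V j $$ (s, a)) * v $ (P*m + s)) *
           X $$ (P*n+a, Q*n+b) * (\<Sum>t<m. cnj (V j $$ (t, b)) * v $ (Q*m + t)))"
      by (simp add: qform_def sum_split w_def idx_lt)
    also have "\<dots> = (\<Sum>j\<in>J. \<Sum>P<k. \<Sum>a<n. \<Sum>Q<k. \<Sum>b<n. \<Sum>s<m. \<Sum>t<m. T j P s Q t a b)"
      by (intro sum.cong refl, simp add: T_def cnj_sum sum_distrib_left sum_distrib_right mult_ac)
    also have "\<dots> = (\<Sum>j\<in>J. \<Sum>P<k. \<Sum>Q<k. \<Sum>a<n. \<Sum>b<n. \<Sum>s<m. \<Sum>t<m. T j P s Q t a b)"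
      by (rule sum.cong[OF refl], rule sum.cong[OF refl], rule sum.swap)
    also have "\<dots> = (\<Sum>j\<in>J. \<Sum>P<k. \<Sum>Q<k. \<Sum>a<n. \<Sum>s<m. \<Sum>b<n. \<Sum>t<m. T j P s Q t a b)"
      by (rule sum.cong[OF refl], rule sum.cong[OF refl], rule sum.cong[OF refl], rule sum.cong[OF refl], rule sum.swap)
    also have "\<dots> = (\<Sum>j\<in>J. \<Sum>P<k. \<Sum>Q<k. \<Sum>s<m. \<Sum>a<n. \<Sum>b<n. \<Sum>t<m. T j P s Q t a b)"
      by (rule sum.cong[OF refl], rule sum.cong[OF refl], rule sum.cong[OF refl], rule sum.swap)
    also have "\<dots> = (\<Sum>j\<in>J. \<Sum>P<k. \<Sum>Q<k. \<Sum>s<m. \<Sum>a<n. \<Sum>t<m. \<Sum>b<n. T j P s Q t a b)"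
      by (rule sum.cong[OF refl], rule sum.cong[OF refl], rule sum.cong[OF refl], rule sum.cong[OF refl],
          rule sum.cong[OF refl], rule sum.swap)
    also have "\<dots> = (\<Sum>j\<in>J. \<Sum>P<k. \<Sum>Q<k. \<Sum>s<m. \<Sum>t<m. \<Sum>a<n. \<Sum>b<n. T j P s Q t a b)"
      by (rule sum.cong[OF refl], rule sum.cong[OF refl], rule sum.cong[OF refl], rule sum.cong[OF refl],
          rule sum.swap)
    finally show ?thesis using L by simp
  qed
  show "positive_op (k*m) (ampl k n m \<Phi> X)"
    unfolding positive_op_def
  proof (intro conjI ballI Ac)
    fix v :: "complex vec" assume "v \<in> carrier_vec (k*m)"
    have wc: "\<And>j. w v j \<in> carrier_vec (k*n)" by (simp add: w_def)
    have nn: "\<And>j. Re (qform (k*n) X (w v j)) \<ge> 0 \<and> Im (qform (k*n) X (w v j)) = 0"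
      using XP wc unfolding positive_op_def by blast
    show "Im (qform (k*m) (ampl k n m \<Phi> X) v) = 0" unfolding key using nn by (simp add: Im_sum)
    show "Re (qform (k*m) (ampl k n m \<Phi> X) v) \<ge> 0" unfolding key using nn by (simp add: Re_sum sum_nonneg)
  qed
qed

definition PhiC :: "nat \<Rightarrow> nat \<Rightarrow> (nat \<Rightarrow> complex mat) \<Rightarrow> complex mat \<Rightarrow> complex mat" where
  "PhiC dS N K M = mat (dS*N) (dS*N) (\<lambda>(p,q). if p mod N = q mod N
     then (K (p mod N) * ptrace2 dS N M * K (p mod N)) $$ (p div N, q div N) else 0)"

lemma PhiC_carrier[simp]: "PhiC dS N K M \<in> carrier_mat (dS*N) (dS*N)"
  by (simp add: PhiC_def)

lemma PhiC_dims[simp]: "dim_row (PhiC dS N K M) = dS*N" "dim_col (PhiC dS N K M) = dS*N"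
  by (simp_all add: PhiC_def)

lemma PhiC_entry: "i < dS \<Longrightarrow> j < dS \<Longrightarrow> a < N \<Longrightarrow> b < N \<Longrightarrow>
  PhiC dS N K M $$ (i*N+a, j*N+b) = (if a = b then (K a * ptrace2 dS N M * K a) $$ (i,j) else 0)"
  by (simp add: PhiC_def idx_lt)

lemma ptrace_add: "A \<in> carrier_mat (a*b) (a*b) \<Longrightarrow> B \<in> carrier_mat (a*b) (a*b) \<Longrightarrow>
  ptrace2 a b (A + B) = ptrace2 a b A + ptrace2 a b B"
  by (rule eq_matI, auto simp: ptrace2_def idx_lt sum.distrib)

lemma ptrace_smult: "A \<in> carrier_mat (a*b) (a*b) \<Longrightarrow> ptrace2 a b (c \<cdot>\<^sub>m A) = c \<cdot>\<^sub>m ptrace2 a b A"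
  by (rule eq_matI, auto simp: ptrace2_def idx_lt sum_distrib_left)

lemma PhiC_linear: assumes K: "\<And>c. c < N \<Longrightarrow> K c \<in> carrier_mat dS dS"
  shows "Defs.linear_map (dS*N) (dS*N) (PhiC dS N K)"
  unfolding Defs.linear_map_def
proof (intro conjI ballI allI PhiC_carrier)
  fix A B :: "complex mat" assume A: "A \<in> carrier_mat (dS*N) (dS*N)" and B: "B \<in> carrier_mat (dS*N) (dS*N)"
  show "PhiC dS N K (A + B) = PhiC dS N K A + PhiC dS N K B"
  proof (rule eq_matI)
    fix p q assume "p < dim_row (PhiC dS N K A + PhiC dS N K B)" "q < dim_col (PhiC dS N K A + PhiC dS N K B)"
    hence p: "p < dS*N" and q: "q < dS*N" by auto
    hence N: "N > 0" by (cases N, auto)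
    have TA: "ptrace2 dS N A \<in> carrier_mat dS dS" "ptrace2 dS N B \<in> carrier_mat dS dS" by auto
    have e: "K c * (ptrace2 dS N A + ptrace2 dS N B) * K c =
      K c * ptrace2 dS N A * K c + K c * ptrace2 dS N B * K c" if c: "c < N" for c
      using K[OF c] TA by (simp add: mult_add_distrib_mat[OF K[OF c] TA] add_mult_distrib_mat[OF mult_sq[OF K[OF c] TA(1)] mult_sq[OF K[OF c] TA(2)] K[OF c]])
    have pd: "p div N < dS" "q div N < dS" using p q by (simp_all add: less_mult_imp_div_less)
    show "PhiC dS N K (A + B) $$ (p,q) = (PhiC dS N K A + PhiC dS N K B) $$ (p,q)"
      using p q pd TA N K[of "q mod N"] K[of "p mod N"] by (simp add: PhiC_def ptrace_add[OF A B] e)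
  qed auto
next
  fix A :: "complex mat" and c :: complex assume A: "A \<in> carrier_mat (dS*N) (dS*N)"
  show "PhiC dS N K (c \<cdot>\<^sub>m A) = c \<cdot>\<^sub>m PhiC dS N K A"
  proof (rule eq_matI)
    fix p q assume "p < dim_row (c \<cdot>\<^sub>m PhiC dS N K A)" "q < dim_col (c \<cdot>\<^sub>m PhiC dS N K A)"
    hence p: "p < dS*N" and q: "q < dS*N" by auto
    hence N: "N > 0" by (cases N, auto)
    have TA: "ptrace2 dS N A \<in> carrier_mat dS dS" by auto
    have e: "K d * (c \<cdot>\<^sub>m ptrace2 dS N A) * K d = c \<cdot>\<^sub>m (K d * ptrace2 dS N A * K d)" if d: "d < N" for d
      using K[OF d] TA by (simp add: mult_smult_distrib[OF K[OF d] TA] mult_smult_assoc_mat[of _ dS dS _ dS])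
    have pd: "p div N < dS" "q div N < dS" using p q by (simp_all add: less_mult_imp_div_less)
    show "PhiC dS N K (c \<cdot>\<^sub>m A) $$ (p,q) = (c \<cdot>\<^sub>m PhiC dS N K A) $$ (p,q)"
      using p q pd TA N K[of "q mod N"] K[of "p mod N"] by (simp add: PhiC_def ptrace_smult[OF A] e)
  qed auto
qed

definition Vk :: "nat \<Rightarrow> nat \<Rightarrow> (nat \<Rightarrow> complex mat) \<Rightarrow> nat \<times> nat \<Rightarrow> complex mat" where
  "Vk dS N K ca = mat (dS*N) (dS*N) (\<lambda>(p,q). if p mod N = fst ca \<and> q mod N = snd ca
      then K (fst ca) $$ (p div N, q div N) else 0)"

lemma Vk_carrier: "Vk dS N K ca \<in> carrier_mat (dS*N) (dS*N)" by (simp add: Vk_def)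

lemma Vk_entry: "i < dS \<Longrightarrow> c1 < N \<Longrightarrow> i' < dS \<Longrightarrow> a' < N \<Longrightarrow>
  Vk dS N K (c,a) $$ (i*N+c1, i'*N+a') = (if c1 = c \<and> a' = a then K c $$ (i,i') else 0)"
  by (simp add: Vk_def idx_lt)

lemma Vk_row: assumes i: "i < dS" and c1: "c1 < N" and a: "a < N"
  shows "(\<Sum>p<dS*N. Vk dS N K (c,a) $$ (i*N+c1, p) * f p) =
    (if c1 = c then (\<Sum>i'<dS. K c $$ (i,i') * f (i'*N + a)) else 0)"
proof -
  have "(\<Sum>p<dS*N. Vk dS N K (c,a) $$ (i*N+c1, p) * f p) =
      (\<Sum>i'<dS. \<Sum>a'<N. (if c1 = c \<and> a' = a then K c $$ (i,i') else 0) * f (i'*N + a'))"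
    unfolding sum_split using i c1 by (intro sum.cong refl, simp add: Vk_entry)
  also have "\<dots> = (\<Sum>i'<dS. (if c1 = c then K c $$ (i,i') * f (i'*N + a) else 0))"
  proof (rule sum.cong[OF refl])
    fix i' assume "i' \<in> {..<dS}"
    have "(\<Sum>a'<N. (if c1 = c \<and> a' = a then K c $$ (i,i') else 0) * f (i'*N + a')) =
        (\<Sum>a'<N. (if a' = a then (if c1 = c then K c $$ (i,i') * f (i'*N + a) else 0) else 0))"
      by (rule sum.cong, auto)
    also have "\<dots> = (if c1 = c then K c $$ (i,i') * f (i'*N + a) else 0)" using a by simp
    finally show "(\<Sum>a'<N. (if c1 = c \<and> a' = a then K c $$ (i,i') else 0) * f (i'*N + a')) =
        (if c1 = c then K c $$ (i,i') * f (i'*N + a) else 0)" .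
  qed
  also have "\<dots> = (if c1 = c then (\<Sum>i'<dS. K c $$ (i,i') * f (i'*N + a)) else 0)" by simp
  finally show ?thesis .
qed

lemma Vk_col: assumes j: "j < dS" and c2: "c2 < N" and a: "a < N"
  shows "(\<Sum>q<dS*N. g q * cnj (Vk dS N K (c,a) $$ (j*N+c2, q))) =
    (if c2 = c then (\<Sum>j'<dS. g (j'*N + a) * cnj (K c $$ (j,j'))) else 0)"
proof -
  have "(\<Sum>q<dS*N. g q * cnj (Vk dS N K (c,a) $$ (j*N+c2, q))) =
      cnj (\<Sum>q<dS*N. Vk dS N K (c,a) $$ (j*N+c2, q) * cnj (g q))"
    by (simp add: cnj_sum mult.commute)
  also have "\<dots> = cnj (if c2 = c then (\<Sum>j'<dS. K c $$ (j,j') * cnj (g (j'*N + a))) else 0)"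
    by (subst Vk_row[OF j c2 a], rule refl)
  also have "\<dots> = (if c2 = c then (\<Sum>j'<dS. g (j'*N + a) * cnj (K c $$ (j,j'))) else 0)"
    by (simp add: cnj_sum mult.commute)
  finally show ?thesis .
qed

lemma sum_prod: "(\<Sum>ca\<in>A\<times>B. F ca) = (\<Sum>c\<in>A. \<Sum>a\<in>B. F (c,a))"
  by (simp add: sum.cartesian_product)

lemma PhiC_cp: assumes K: "\<And>c. c < N \<Longrightarrow> K c \<in> carrier_mat dS dS" and H: "\<And>c. c < N \<Longrightarrow> adj (K c) = K c"
  shows "completely_positive (dS*N) (dS*N) (PhiC dS N K)"
proof (rule kraus_cp[of "{..<N} \<times> {..<N}" "Vk dS N K"])
  fix M :: "complex mat" and s t assume M: "M \<in> carrier_mat (dS*N) (dS*N)" and s: "s < dS*N" and t: "t < dS*N"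
  have N: "N > 0" using s by (cases N, auto)
  define i where "i = s div N"
  define c1 where "c1 = s mod N"
  define j where "j = t div N"
  define c2 where "c2 = t mod N"
  have i: "i < dS" and j: "j < dS" using s t unfolding i_def j_def by (simp_all add: less_mult_imp_div_less)
  have c1: "c1 < N" and c2: "c2 < N" using N unfolding c1_def c2_def by simp_all
  have sd: "s = i*N + c1" and td: "t = j*N + c2" unfolding i_def c1_def j_def c2_def by simp_all
  let ?T = "ptrace2 dS N M"
  have Tc: "?T \<in> carrier_mat dS dS" by simp
  have Tent: "\<And>l l'. l < dS \<Longrightarrow> l' < dS \<Longrightarrow> ?T $$ (l,l') = (\<Sum>a<N. M $$ (l*N+a, l'*N+a))"
    by (simp add: ptrace2_def)
  have KTK: "(K c * ?T * K c) $$ (i,j) = (\<Sum>a<N. \<Sum>l<dS. K c $$ (i,l) * (\<Sum>l'<dS. M $$ (l*N+a, l'*N+a) * cnj (K c $$ (j,l'))))"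
    if c: "c < N" for c
  proof -
    have "(K c * ?T * K c) $$ (i,j) = (\<Sum>l'<dS. (K c * ?T) $$ (i,l') * K c $$ (l',j))"
      by (rule mult_entry[OF mult_sq[OF K[OF c] Tc] K[OF c] i j])
    also have "\<dots> = (\<Sum>l'<dS. (\<Sum>l<dS. K c $$ (i,l) * ?T $$ (l,l')) * K c $$ (l',j))"
      by (rule sum.cong[OF refl], subst mult_entry[OF K[OF c] Tc i], auto)
    also have "\<dots> = (\<Sum>l'<dS. \<Sum>l<dS. \<Sum>a<N. K c $$ (i,l) * M $$ (l*N+a, l'*N+a) * cnj (K c $$ (j,l')))"
    proof (rule sum.cong[OF refl])
      fix l' assume l': "l' \<in> {..<dS}"
      have "K c $$ (l',j) = cnj (K c $$ (j,l'))" using H[OF c] K[OF c] l' j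
        by (metis adj_index carrier_matD(1) carrier_matD(2) complex_cnj_cnj lessThan_iff)
      thus "(\<Sum>l<dS. K c $$ (i,l) * ?T $$ (l,l')) * K c $$ (l',j) =
          (\<Sum>l<dS. \<Sum>a<N. K c $$ (i,l) * M $$ (l*N+a, l'*N+a) * cnj (K c $$ (j,l')))"
        using l' by (simp add: Tent sum_distrib_left sum_distrib_right mult_ac)
    qed
    also have "\<dots> = (\<Sum>l<dS. \<Sum>l'<dS. \<Sum>a<N. K c $$ (i,l) * M $$ (l*N+a, l'*N+a) * cnj (K c $$ (j,l')))"
      by (rule sum.swap)
    also have "\<dots> = (\<Sum>l<dS. \<Sum>a<N. \<Sum>l'<dS. K c $$ (i,l) * M $$ (l*N+a, l'*N+a) * cnj (K c $$ (j,l')))"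
      by (rule sum.cong[OF refl], rule sum.swap)
    also have "\<dots> = (\<Sum>a<N. \<Sum>l<dS. \<Sum>l'<dS. K c $$ (i,l) * M $$ (l*N+a, l'*N+a) * cnj (K c $$ (j,l')))"
      by (rule sum.swap)
    finally show ?thesis by (simp add: sum_distrib_left mult_ac)
  qed
  have "(\<Sum>ca\<in>{..<N} \<times> {..<N}. \<Sum>p<dS*N. \<Sum>q<dS*N. Vk dS N K ca $$ (s,p) * M $$ (p,q) * cnj (Vk dS N K ca $$ (t,q)))
     = (\<Sum>c<N. \<Sum>a<N. \<Sum>p<dS*N. Vk dS N K (c,a) $$ (s,p) * (\<Sum>q<dS*N. M $$ (p,q) * cnj (Vk dS N K (c,a) $$ (t,q))))"
    by (subst sum_prod, rule sum.cong[OF refl], rule sum.cong[OF refl], rule sum.cong[OF refl],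
        simp add: sum_distrib_left mult.assoc)
  also have "\<dots> = (\<Sum>c<N. \<Sum>a<N. if c1 = c then (\<Sum>i'<dS. K c $$ (i,i') *
      (if c2 = c then (\<Sum>j'<dS. M $$ (i'*N+a, j'*N+a) * cnj (K c $$ (j,j'))) else 0)) else 0)"
  proof (rule sum.cong[OF refl], rule sum.cong[OF refl])
    fix c a assume "c \<in> {..<N}" "a \<in> {..<N}"
    hence a: "a < N" by simp
    show "(\<Sum>p<dS*N. Vk dS N K (c,a) $$ (s,p) * (\<Sum>q<dS*N. M $$ (p,q) * cnj (Vk dS N K (c,a) $$ (t,q)))) =
      (if c1 = c then (\<Sum>i'<dS. K c $$ (i,i') *
      (if c2 = c then (\<Sum>j'<dS. M $$ (i'*N+a, j'*N+a) * cnj (K c $$ (j,j'))) else 0)) else 0)"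
      unfolding sd td Vk_row[OF i c1 a] Vk_col[OF j c2 a] by simp
  qed
  also have "\<dots> = (\<Sum>c<N. if c1 = c then (\<Sum>a<N. \<Sum>i'<dS. K c $$ (i,i') *
      (if c2 = c then (\<Sum>j'<dS. M $$ (i'*N+a, j'*N+a) * cnj (K c $$ (j,j'))) else 0)) else 0)"
    by (rule sum.cong[OF refl], simp)
  also have "\<dots> = (\<Sum>a<N. \<Sum>i'<dS. K c1 $$ (i,i') *
      (if c2 = c1 then (\<Sum>j'<dS. M $$ (i'*N+a, j'*N+a) * cnj (K c1 $$ (j,j'))) else 0))"
    using c1 by simp
  also have "\<dots> = PhiC dS N K M $$ (s,t)"
    unfolding sd td PhiC_entry[OF i j c1 c2] using KTK[OF c1] by (cases "c1 = c2", auto)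
  finally show "PhiC dS N K M $$ (s,t) = (\<Sum>ca\<in>{..<N} \<times> {..<N}. \<Sum>p<dS*N. \<Sum>q<dS*N.
      Vk dS N K ca $$ (s,p) * M $$ (p,q) * cnj (Vk dS N K ca $$ (t,q)))" by simp
qed (auto simp: Vk_carrier)

lemma rc_sum[simp]: "dim_col A = dim_row B \<Longrightarrow> i < dim_row A \<Longrightarrow> j < dim_col B \<Longrightarrow> row A i \<bullet> col B j = (\<Sum>l<dim_col A. A $$ (i,l) * B $$ (l,j))"
  by (auto simp: scalar_prod_def lessThan_atLeast0 intro!: sum.cong)

lemma sum_delta_l2: "i < (d::nat) \<Longrightarrow> (\<Sum>l<d. (if i = l then 1 else 0) * f l) = (f i :: complex)"
proof -
  assume i: "i < d"
  have "(\<Sum>l<d. (if i = l then 1 else 0) * f l) = (\<Sum>l<d. if l = i then f l else 0)" by (rule sum.cong, auto)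
  thus ?thesis using i by (simp only: sum.delta finite_lessThan, simp)
qed

lemma sum_if_in: "c < (N::nat) \<Longrightarrow> (\<Sum>e<N. if P then (if e = c then F e else 0) else 0) = (if P then F c else (0::complex))"
  by (cases P, simp_all)

lemma sum_if_r: "b < (N::nat) \<Longrightarrow> (\<Sum>a'<N. F a' * (if a' = b then G else 0)) = (F b * G :: complex)"
proof -
  assume b: "b < N"
  have "(\<Sum>a'<N. F a' * (if a' = b then G else 0)) = (\<Sum>a'<N. if a' = b then F b * G else 0)"
    by (rule sum.cong, auto)
  thus ?thesis using b by (simp only: sum.delta finite_lessThan, simp)
qed

lemma sum_if_eq: "a < (N::nat) \<Longrightarrow> (\<Sum>b<N. f b * (if a = b then g b else 0) * h b) = (f a * g a * h a :: complex)"
proof -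
  assume a: "a < N"
  have "(\<Sum>b<N. f b * (if a = b then g b else 0) * h b) = (\<Sum>b<N. if b = a then f a * g a * h a else 0)"
    by (rule sum.cong, auto)
  thus ?thesis using a sum.delta[of "{..<N}" a "\<lambda>_. f a * g a * h a"] by simp
qed

lemma trace_cyc: assumes A: "A \<in> carrier_mat n n" and B: "B \<in> carrier_mat n n"
  shows "mtrace (A * B) = mtrace (B * A)"
proof -
  have "mtrace (A * B) = (\<Sum>i<n. \<Sum>l<n. A $$ (i,l) * B $$ (l,i))"
    using A B by (simp add: mtrace_def mult_entry[OF A B])
  also have "\<dots> = (\<Sum>l<n. \<Sum>i<n. B $$ (l,i) * A $$ (i,l))" by (subst sum.swap, simp add: mult.commute)
  also have "\<dots> = mtrace (B * A)" using A B by (simp add: mtrace_def mult_entry[OF B A])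
  finally show ?thesis .
qed

lemma PhiC_tp: assumes K: "\<And>c. c < N \<Longrightarrow> K c \<in> carrier_mat dS dS"
  and S: "\<And>i l. i < dS \<Longrightarrow> l < dS \<Longrightarrow> (\<Sum>c<N. (K c * K c) $$ (i,l)) = (if i = l then 1 else 0)"
  shows "trace_preserving (dS*N) (PhiC dS N K)"
  unfolding trace_preserving_def
proof
  fix M :: "complex mat" assume M: "M \<in> carrier_mat (dS*N) (dS*N)"
  let ?T = "ptrace2 dS N M"
  have Tc: "?T \<in> carrier_mat dS dS" by simp
  have "mtrace (PhiC dS N K M) = (\<Sum>i<dS. \<Sum>c<N. (K c * ?T * K c) $$ (i,i))"
    by (simp add: mtrace_def sum_split PhiC_entry)
  also have "\<dots> = (\<Sum>c<N. mtrace (K c * ?T * K c))"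
  proof (subst sum.swap, rule sum.cong[OF refl])
    fix c assume "c \<in> {..<N}"
    hence Kc: "K c \<in> carrier_mat dS dS" using K by simp
    show "(\<Sum>i<dS. (K c * ?T * K c) $$ (i,i)) = mtrace (K c * ?T * K c)"
      using carrier_matD[OF Kc] by (simp add: mtrace_def)
  qed
  also have "\<dots> = (\<Sum>c<N. mtrace ((K c * K c) * ?T))"
  proof (rule sum.cong[OF refl])
    fix c assume "c \<in> {..<N}"
    hence Kc: "K c \<in> carrier_mat dS dS" using K by simp
    have "mtrace (K c * ?T * K c) = mtrace (K c * (K c * ?T))" by (rule trace_cyc[OF mult_sq[OF Kc Tc] Kc])
    also have "K c * (K c * ?T) = (K c * K c) * ?T" using Kc Tc by (simp add: assoc_mult_mat[of _ dS dS _ dS _ dS])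
    finally show "mtrace (K c * ?T * K c) = mtrace ((K c * K c) * ?T)" .
  qed
  also have "\<dots> = (\<Sum>c<N. \<Sum>i<dS. \<Sum>l<dS. (K c * K c) $$ (i,l) * ?T $$ (l,i))"
  proof (rule sum.cong[OF refl])
    fix c assume "c \<in> {..<N}"
    hence Kc: "K c \<in> carrier_mat dS dS" using K by simp
    show "mtrace ((K c * K c) * ?T) = (\<Sum>i<dS. \<Sum>l<dS. (K c * K c) $$ (i,l) * ?T $$ (l,i))"
      using carrier_matD[OF Kc] Tc by (simp add: mtrace_def)
  qed
  also have "\<dots> = (\<Sum>i<dS. \<Sum>l<dS. (\<Sum>c<N. (K c * K c) $$ (i,l)) * ?T $$ (l,i))"
    by (subst sum.swap, rule sum.cong[OF refl], subst sum.swap, simp add: sum_distrib_right)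
  also have "\<dots> = (\<Sum>i<dS. ?T $$ (i,i))"
  proof (rule sum.cong[OF refl])
    fix i assume "i \<in> {..<dS}"
    hence i: "i < dS" by simp
    have "(\<Sum>l<dS. (\<Sum>c<N. (K c * K c) $$ (i,l)) * ?T $$ (l,i)) = (\<Sum>l<dS. (if i = l then 1 else 0) * ?T $$ (l,i))"
      by (rule sum.cong[OF refl], simp add: S i)
    thus "(\<Sum>l<dS. (\<Sum>c<N. (K c * K c) $$ (i,l)) * ?T $$ (l,i)) = ?T $$ (i,i)" using sum_delta_l2[OF i] by simp
  qed
  also have "\<dots> = mtrace M" using M by (simp add: mtrace_def ptrace2_def sum_split)
  finally show "mtrace (PhiC dS N K M) = mtrace M" .
qed

definition ev :: "nat \<Rightarrow> nat \<Rightarrow> complex vec \<Rightarrow> nat \<Rightarrow> complex vec" where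
  "ev dS N u b = vec (dS*N) (\<lambda>p. if p mod N = b then u $ (p div N) else 0)"

lemma ev_entry: "i < dS \<Longrightarrow> a < N \<Longrightarrow> ev dS N u b $ (i*N+a) = (if a = b then u $ i else 0)"
  by (simp add: ev_def idx_lt)

lemma ptrace_qform: assumes M: "M \<in> carrier_mat (dS*N) (dS*N)"
  shows "qform dS (ptrace2 dS N M) u = (\<Sum>b<N. qform (dS*N) M (ev dS N u b))"
proof -
  have "qform dS (ptrace2 dS N M) u = (\<Sum>i<dS. \<Sum>j<dS. \<Sum>b<N. cnj (u$i) * M $$ (i*N+b, j*N+b) * u$j)"
    by (simp add: qform_def ptrace2_def sum_distrib_left sum_distrib_right)
  also have "\<dots> = (\<Sum>i<dS. \<Sum>b<N. \<Sum>j<dS. cnj (u$i) * M $$ (i*N+b, j*N+b) * u$j)"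
    by (rule sum.cong[OF refl], rule sum.swap)
  also have "\<dots> = (\<Sum>b<N. \<Sum>i<dS. \<Sum>j<dS. cnj (u$i) * M $$ (i*N+b, j*N+b) * u$j)"
    by (rule sum.swap)
  also have "\<dots> = (\<Sum>b<N. qform (dS*N) M (ev dS N u b))"
  proof (rule sum.cong[OF refl])
    fix b assume "b \<in> {..<N}"
    hence b: "b < N" by simp
    have "qform (dS*N) M (ev dS N u b) = (\<Sum>i<dS. \<Sum>a<N. \<Sum>j<dS. \<Sum>a'<N.
       cnj (if a = b then u $ i else 0) * M $$ (i*N+a, j*N+a') * (if a' = b then u $ j else 0))"
      unfolding qform_def sum_split
      by (rule sum.cong[OF refl], rule sum.cong[OF refl], rule sum.cong[OF refl], rule sum.cong[OF refl],
          simp add: ev_entry)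
    also have "\<dots> = (\<Sum>i<dS. \<Sum>a<N. (if a = b then (\<Sum>j<dS. cnj (u$i) * M $$ (i*N+b, j*N+b) * u$j) else 0))"
    proof (rule sum.cong[OF refl], rule sum.cong[OF refl])
      fix i a assume "i \<in> {..<dS}" "a \<in> {..<N}"
      show "(\<Sum>j<dS. \<Sum>a'<N. cnj (if a = b then u $ i else 0) * M $$ (i*N+a, j*N+a') * (if a' = b then u $ j else 0)) =
        (if a = b then (\<Sum>j<dS. cnj (u$i) * M $$ (i*N+b, j*N+b) * u$j) else 0)"
        by (cases "a = b", auto intro!: sum.cong simp: sum_if_r[OF b] b)
    qed
    also have "\<dots> = (\<Sum>i<dS. \<Sum>j<dS. cnj (u$i) * M $$ (i*N+b, j*N+b) * u$j)" using b
      by (simp only: sum.delta finite_lessThan, simp)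
    finally show "(\<Sum>i<dS. \<Sum>j<dS. cnj (u$i) * M $$ (i*N+b, j*N+b) * u$j) = qform (dS*N) M (ev dS N u b)" by simp
  qed
  finally show ?thesis .
qed

lemma ptrace_posdef: assumes M: "pos_def_op (dS*N) M" and N: "N > 0"
  shows "pos_def_op dS (ptrace2 dS N M)"
  unfolding pos_def_op_def
proof (intro conjI ballI impI ptrace_carrier)
  fix u :: "complex vec" assume u: "u \<in> carrier_vec dS" and u0: "u \<noteq> 0\<^sub>v dS"
  have Mc: "M \<in> carrier_mat (dS*N) (dS*N)" using M by (simp add: pos_def_op_def)
  have ec: "\<And>b. ev dS N u b \<in> carrier_vec (dS*N)" by (simp add: ev_def)
  obtain i where i: "i < dS" and ui: "u $ i \<noteq> 0"
    using u u0 by (metis carrier_vecD eq_vecI index_zero_vec(1) index_zero_vec(2))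
  have "ev dS N u 0 $ (i*N + 0) = u $ i" using i N by (simp add: ev_def idx_lt)
  hence "ev dS N u 0 \<noteq> 0\<^sub>v (dS*N)" using ui idx_lt[OF i N] by auto
  hence pos: "Re (qform (dS*N) M (ev dS N u 0)) > 0" using M ec unfolding pos_def_op_def by auto
  have nn: "\<And>b. Re (qform (dS*N) M (ev dS N u b)) \<ge> 0 \<and> Im (qform (dS*N) M (ev dS N u b)) = 0"
    using posdef_re_nonneg[OF M ec] by blast
  have "0 < (\<Sum>b<N. Re (qform (dS*N) M (ev dS N u b)))"
    by (rule sum_pos2[of "{..<N}" 0], insert N pos nn, auto)
  thus "Re (qform dS (ptrace2 dS N M) u) > 0" unfolding ptrace_qform[OF Mc] by (simp add: Re_sum)
  show "Im (qform dS (ptrace2 dS N M) u) = 0" unfolding ptrace_qform[OF Mc] using nn by (simp add: Im_sum)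
qed

lemma qform_KTK: assumes K: "K \<in> carrier_mat d d" and H: "adj K = K" and T: "T \<in> carrier_mat d d"
  and u: "u \<in> carrier_vec d"
  shows "qform d (K * T * K) u = qform d T (K *\<^sub>v u)"
proof -
  have "qform d (K * T * K) u = ip u (K *\<^sub>v (T *\<^sub>v (K *\<^sub>v u)))"
    using K T u by (simp add: qform_ip assoc_mult_mat_vec[of _ d d _ d])
  also have "\<dots> = ip (K *\<^sub>v u) (T *\<^sub>v (K *\<^sub>v u))" using ip_mult[OF K u, of "T *\<^sub>v (K *\<^sub>v u)"] H K T u by simp
  finally show ?thesis using K T u by (simp add: qform_ip)
qed

definition vsl :: "nat \<Rightarrow> nat \<Rightarrow> complex vec \<Rightarrow> nat \<Rightarrow> complex vec" where
  "vsl dS N v a = vec dS (\<lambda>i. v $ (i*N + a))"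

lemma PhiC_qform: "qform (dS*N) (PhiC dS N K M) v =
   (\<Sum>a<N. qform dS (K a * ptrace2 dS N M * K a) (vsl dS N v a))"
proof -
  let ?T = "ptrace2 dS N M"
  have "qform (dS*N) (PhiC dS N K M) v = (\<Sum>i<dS. \<Sum>a<N. \<Sum>j<dS. \<Sum>b<N.
      cnj (v $ (i*N+a)) * (if a = b then (K a * ?T * K a) $$ (i,j) else 0) * v $ (j*N+b))"
    by (simp add: qform_def sum_split PhiC_entry)
  also have "\<dots> = (\<Sum>i<dS. \<Sum>a<N. \<Sum>j<dS. cnj (v $ (i*N+a)) * (K a * ?T * K a) $$ (i,j) * v $ (j*N+a))"
    by (rule sum.cong[OF refl], rule sum.cong[OF refl], rule sum.cong[OF refl], simp add: sum_if_eq)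
  also have "\<dots> = (\<Sum>a<N. \<Sum>i<dS. \<Sum>j<dS. cnj (v $ (i*N+a)) * (K a * ?T * K a) $$ (i,j) * v $ (j*N+a))"
    by (rule sum.swap)
  also have "\<dots> = (\<Sum>a<N. qform dS (K a * ?T * K a) (vsl dS N v a))"
    by (simp add: qform_def vsl_def)
  finally show ?thesis .
qed

lemma PhiC_posdef: assumes K: "\<And>c. c < N \<Longrightarrow> K c \<in> carrier_mat dS dS"
  and H: "\<And>c. c < N \<Longrightarrow> adj (K c) = K c"
  and inj: "\<And>c u. c < N \<Longrightarrow> u \<in> carrier_vec dS \<Longrightarrow> K c *\<^sub>v u = 0\<^sub>v dS \<Longrightarrow> u = 0\<^sub>v dS"
  and M: "pos_def_op (dS*N) M" and N: "N > 0"
  shows "pos_def_op (dS*N) (PhiC dS N K M)"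
  unfolding pos_def_op_def
proof (intro conjI ballI impI PhiC_carrier)
  let ?T = "ptrace2 dS N M"
  have T: "pos_def_op dS ?T" by (rule ptrace_posdef[OF M N])
  have Tc: "?T \<in> carrier_mat dS dS" by simp
  fix v :: "complex vec" assume v: "v \<in> carrier_vec (dS*N)" and v0: "v \<noteq> 0\<^sub>v (dS*N)"
  have vc: "\<And>a. vsl dS N v a \<in> carrier_vec dS" by (simp add: vsl_def)
  have eq: "\<And>a. a < N \<Longrightarrow> qform dS (K a * ?T * K a) (vsl dS N v a) = qform dS ?T (K a *\<^sub>v vsl dS N v a)"
    using qform_KTK[OF K H Tc vc] by blast
  have nn: "\<And>a. a < N \<Longrightarrow> Re (qform dS (K a * ?T * K a) (vsl dS N v a)) \<ge> 0 \<and>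
      Im (qform dS (K a * ?T * K a) (vsl dS N v a)) = 0"
    using eq posdef_re_nonneg[OF T] K vc by (metis mv_carr)
  obtain p where p: "p < dS*N" and vp: "v $ p \<noteq> 0"
    using v v0 by (metis carrier_vecD eq_vecI index_zero_vec(1) index_zero_vec(2))
  define i where "i = p div N"
  define a where "a = p mod N"
  have i: "i < dS" using p N unfolding i_def by (simp add: less_mult_imp_div_less)
  have a: "a < N" using N unfolding a_def by simp
  have "p = i*N + a" unfolding i_def a_def by simp
  hence "vsl dS N v a $ i \<noteq> 0" using vp i by (simp add: vsl_def)
  hence "vsl dS N v a \<noteq> 0\<^sub>v dS" using i by auto
  hence "K a *\<^sub>v vsl dS N v a \<noteq> 0\<^sub>v dS" using inj[OF a vc] by blast
  hence "Re (qform dS ?T (K a *\<^sub>v vsl dS N v a)) > 0" using T K[OF a] vc unfolding pos_def_op_def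
    by (meson mv_carr)
  hence pos: "Re (qform dS (K a * ?T * K a) (vsl dS N v a)) > 0" using eq[OF a] by simp
  have "0 < (\<Sum>a<N. Re (qform dS (K a * ?T * K a) (vsl dS N v a)))"
    by (rule sum_pos2[of "{..<N}" a], insert a pos nn, auto)
  thus "Re (qform (dS*N) (PhiC dS N K M) v) > 0" unfolding PhiC_qform by (simp add: Re_sum)
  show "Im (qform (dS*N) (PhiC dS N K M) v) = 0" unfolding PhiC_qform using nn by (simp add: Im_sum)
qed

lemma ptrace_kron: assumes r: "\<rho> \<in> carrier_mat dS dS" and x: "\<xi> \<in> carrier_mat N N" and t: "mtrace \<xi> = 1"
  shows "ptrace2 dS N (kron \<rho> \<xi>) = \<rho>"
proof (rule eq_matI)
  fix i j assume "i < dim_row \<rho>" "j < dim_col \<rho>"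
  hence i: "i < dS" and j: "j < dS" using r by auto
  have "ptrace2 dS N (kron \<rho> \<xi>) $$ (i,j) = (\<Sum>b<N. \<rho> $$ (i,j) * \<xi> $$ (b,b))"
    using i j by (simp add: ptrace2_def kron_entry[OF r x])
  also have "\<dots> = \<rho> $$ (i,j) * mtrace \<xi>" using x by (simp add: mtrace_def sum_distrib_left)
  finally show "ptrace2 dS N (kron \<rho> \<xi>) $$ (i,j) = \<rho> $$ (i,j)" using t by simp
qed (use r in auto)

lemma PhiC_instr: assumes K: "\<And>c. c < N \<Longrightarrow> K c \<in> carrier_mat dS dS"
  and x: "\<xi> \<in> carrier_mat N N" and t: "mtrace \<xi> = 1" and r: "\<rho> \<in> carrier_mat dS dS" and c: "c < N"
  shows "ptrace2 dS N (kron (1\<^sub>m dS) (mat N N (\<lambda>(a,b). if a = c \<and> b = c then 1 else 0)) *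
      PhiC dS N K (kron \<rho> \<xi>)) = K c * \<rho> * K c"
proof (rule eq_matI)
  let ?Z = "mat N N (\<lambda>(a,b). if a = c \<and> b = c then 1 else 0) :: complex mat"
  have Zc: "?Z \<in> carrier_mat N N" by simp
  fix i j assume "i < dim_row (K c * \<rho> * K c)" "j < dim_col (K c * \<rho> * K c)"
  hence i: "i < dS" and j: "j < dS" using K[OF c] by auto
  have "ptrace2 dS N (kron (1\<^sub>m dS) ?Z * PhiC dS N K (kron \<rho> \<xi>)) $$ (i,j) =
     (\<Sum>b<N. \<Sum>e<N. ?Z $$ (b,e) * PhiC dS N K (kron \<rho> \<xi>) $$ (i*N+e, j*N+b))"
    by (rule ptrace_entry[OF PhiC_carrier Zc i j])
  also have "\<dots> = (\<Sum>b<N. \<Sum>e<N. (if b = c then (if e = c then PhiC dS N K (kron \<rho> \<xi>) $$ (i*N+c, j*N+c) else 0) else 0))"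
    by (rule sum.cong[OF refl], rule sum.cong[OF refl], auto)
  also have "\<dots> = PhiC dS N K (kron \<rho> \<xi>) $$ (i*N+c, j*N+c)" using c by (simp add: sum_if_in)
  also have "\<dots> = (K c * \<rho> * K c) $$ (i,j)" by (simp add: PhiC_entry[OF i j c c] ptrace_kron[OF r x t])
  finally show "ptrace2 dS N (kron (1\<^sub>m dS) ?Z * PhiC dS N K (kron \<rho> \<xi>)) $$ (i,j) = (K c * \<rho> * K c) $$ (i,j)" .
qed (use K[OF c] in auto)

lemma msum_qform: assumes X: "finite X" and F: "\<And>x. x \<in> X \<Longrightarrow> F x \<in> carrier_mat d d"
  shows "qform d (msum d X F) v = (\<Sum>x\<in>X. qform d (F x) v)"
proof -
  have "qform d (msum d X F) v = (\<Sum>i<d. \<Sum>j<d. \<Sum>x\<in>X. cnj (v$i) * F x $$ (i,j) * v$j)"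
    by (simp add: qform_def msum_def sum_distrib_left sum_distrib_right)
  also have "\<dots> = (\<Sum>i<d. \<Sum>x\<in>X. \<Sum>j<d. cnj (v$i) * F x $$ (i,j) * v$j)"
    by (rule sum.cong[OF refl], rule sum.swap)
  also have "\<dots> = (\<Sum>x\<in>X. qform d (F x) v)" unfolding qform_def by (rule sum.swap)
  finally show ?thesis .
qed

lemma qform_smult: "qform d (c \<cdot>\<^sub>m A) v = c * qform d A v" if "A \<in> carrier_mat d d"
  using that by (simp add: qform_def sum_distrib_left mult_ac)

lemma obs_facts: assumes "observable d X E" "x \<in> X"
  shows "E x \<in> carrier_mat d d" "positive_op d (E x)" "E x \<noteq> 0\<^sub>m d d"
  using assms by (auto simp: observable_def positive_op_def)

lemma forward:
  assumes dS: "2 \<le> dS" and obs: "observable dS X E" and nt: "nontrivial_obs dS X E"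
    and sch: "third_law_scheme dS X dA \<xi> \<Phi> Z"
    and impl: "\<forall>x\<in>X. \<forall>\<rho>\<in>carrier_mat dS dS. scheme_instrument dS dA \<xi> \<Phi> Z x \<rho> = lueders dS E x \<rho>"
  shows "completely_unsharp X E"
proof -
  have finX: "finite X" using obs by (simp add: observable_def)
  have dS0: "dS > 0" using dS by simp
  have xi: "full_rank_state dA \<xi>" and ch: "third_law_channel (dS*dA) (dS*dA) \<Phi>"
    and Zp: "\<And>x. x \<in> X \<Longrightarrow> positive_op dA (Z x)"
    using sch by (auto simp: third_law_scheme_def measurement_scheme_def)
  define c where "c = (1 / of_nat dS :: complex)"
  have c0: "c \<noteq> 0" using dS0 unfolding c_def by simp
  define \<rho> where "\<rho> = c \<cdot>\<^sub>m 1\<^sub>m dS"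
  have \<rho>c: "\<rho> \<in> carrier_mat dS dS" unfolding \<rho>_def by simp
  define \<sigma> where "\<sigma> = \<Phi> (kron \<rho> \<xi>)"
  have \<sigma>: "full_rank_state (dS*dA) \<sigma>" unfolding \<sigma>_def
    using ch kron_state[OF xi dS0] unfolding third_law_channel_def \<rho>_def c_def by blast
  have \<sigma>pd: "pos_def_op (dS*dA) \<sigma>" using \<sigma> by (simp add: full_rank_state_def)
  have \<sigma>c: "\<sigma> \<in> carrier_mat (dS*dA) (dS*dA)" using \<sigma>pd by (simp add: pos_def_op_def)
  have no0: "\<not> eigenvalue (E x) 0" if x: "x \<in> X" for x
  proof
    assume ev: "eigenvalue (E x) 0"
    note Ef = obs_facts[OF obs x]
    from ev Ef obtain u where u: "u \<in> carrier_vec dS" and u0: "u \<noteq> 0\<^sub>v dS" and Eu: "E x *\<^sub>v u = 0 \<cdot>\<^sub>v u"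
      unfolding eigenvalue_def eigenvector_def by auto
    have Eu0: "E x *\<^sub>v u = 0\<^sub>v dS" using Eu u by auto
    define K where "K = psd_sqrt dS (E x)"
    have K: "positive_op dS K" "K * K = E x" using psd_sqrt_prop[OF Ef(2)] unfolding K_def by auto
    have Kc: "K \<in> carrier_mat dS dS" using K by (simp add: positive_op_def)
    have lu: "lueders dS E x \<rho> = c \<cdot>\<^sub>m E x"
    proof -
      have "lueders dS E x \<rho> = K * \<rho> * K" unfolding lueders_def K_def ..
      also have "\<dots> = c \<cdot>\<^sub>m (K * K)" unfolding \<rho>_def using Kc
        by (simp add: mult_smult_distrib[OF Kc one_carrier_mat] mult_smult_assoc_mat[of _ dS dS K dS])
      finally show ?thesis using K by simp
    qed
    have eqI: "ptrace2 dS dA (kron (1\<^sub>m dS) (Z x) * \<sigma>) = c \<cdot>\<^sub>m E x"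
      using impl x \<rho>c lu unfolding scheme_instrument_def \<sigma>_def by simp
    show False
    proof (cases "Z x = 0\<^sub>m dA dA")
      case True
      hence "c \<cdot>\<^sub>m E x = 0\<^sub>m dS dS" using eqI ptrace_zero[OF \<sigma>c] by simp
      hence "E x = 0\<^sub>m dS dS" using c0 Ef(1)
        by (intro eq_matI, auto, metis carrier_matD index_smult_mat(1) index_zero_mat(1) mult_eq_0_iff)
      thus False using Ef by simp
    next
      case False
      have "Re (qform dS (c \<cdot>\<^sub>m E x) u) > 0"
        using instr_pos[OF \<sigma>pd Zp[OF x] False u u0] eqI by simp
      moreover have "qform dS (c \<cdot>\<^sub>m E x) u = 0"
        using qform_smult[OF Ef(1)] qform_ip[OF Ef(1) u] Eu0 by (simp add: ip_def)
      ultimately show False by simp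
    qed
  qed
  have no1: "\<not> eigenvalue (E x) 1" if x: "x \<in> X" for x
  proof
    assume ev: "eigenvalue (E x) 1"
    note Ef = obs_facts[OF obs x]
    from ev Ef obtain u where u: "u \<in> carrier_vec dS" and u0: "u \<noteq> 0\<^sub>v dS" and Eu: "E x *\<^sub>v u = 1 \<cdot>\<^sub>v u"
      unfolding eigenvalue_def eigenvector_def by auto
    have Eu1: "E x *\<^sub>v u = u" using Eu by simp
    have ms: "msum dS X E = 1\<^sub>m dS" using obs by (simp add: observable_def)
    obtain y where y: "y \<in> X" and yx: "y \<noteq> x"
    proof -
      { assume "X = {x}"
        hence "msum dS X E = E x" using Ef(1) by (intro eq_matI, auto simp: msum_def)
        moreover have "(1::complex) \<cdot>\<^sub>m 1\<^sub>m dS = 1\<^sub>m dS" by (intro eq_matI, auto)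
        ultimately have "E x = 1 \<cdot>\<^sub>m 1\<^sub>m dS" using ms by simp
        moreover obtain z where "z \<in> X" "\<not> (\<exists>c. E z = c \<cdot>\<^sub>m 1\<^sub>m dS)" using nt by (auto simp: nontrivial_obs_def)
        ultimately have False using \<open>X = {x}\<close> by auto }
      thus ?thesis using that x by blast
    qed
    have "ip u u = qform dS (msum dS X E) u" using ms u by (simp add: qform_ip)
    also have "\<dots> = (\<Sum>z\<in>X. qform dS (E z) u)"
      by (rule msum_qform[OF finX], use obs_facts[OF obs] in auto)
    also have "\<dots> = qform dS (E x) u + (\<Sum>z\<in>X - {x}. qform dS (E z) u)"
      using finX x by (simp add: sum.remove)
    also have "qform dS (E x) u = ip u u" using qform_ip[OF Ef(1) u] Eu1 by simp
    finally have s0: "(\<Sum>z\<in>X - {x}. qform dS (E z) u) = 0" by simp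
    have nn: "\<And>z. z \<in> X \<Longrightarrow> Re (qform dS (E z) u) \<ge> 0 \<and> Im (qform dS (E z) u) = 0"
      using obs_facts(2)[OF obs] u unfolding positive_op_def by blast
    have "(\<Sum>z\<in>X - {x}. Re (qform dS (E z) u)) = 0" using s0 by (metis Re_sum zero_complex.simps(1))
    hence "Re (qform dS (E y) u) = 0"
      using sum_nonneg_eq_0_iff[of "X - {x}" "\<lambda>z. Re (qform dS (E z) u)"] finX y yx nn by auto
    hence "qform dS (E y) u = 0" using nn[OF y] by (simp add: complex_eq_iff)
    hence "E y *\<^sub>v u = 0\<^sub>v dS" using psd_kernel[OF obs_facts(2)[OF obs y] u] by simp
    hence "eigenvector (E y) u 0" using u u0 obs_facts(1)[OF obs y] unfolding eigenvector_def by auto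
    hence "eigenvalue (E y) 0" unfolding eigenvalue_def by auto
    thus False using no0[OF y] by simp
  qed
  show ?thesis unfolding completely_unsharp_def using no0 no1 by blast
qed

lemma qform_one: "v \<in> carrier_vec d \<Longrightarrow> qform d (1\<^sub>m d) v = ip v v"
  by (simp add: qform_ip)

lemma backward:
  assumes dS: "2 \<le> dS" and obs: "observable dS X E" and nt: "nontrivial_obs dS X E"
    and cu: "completely_unsharp X E"
  shows "\<exists>(dA::nat) \<xi> \<Phi> Z. 0 < dA \<and> third_law_scheme dS X dA \<xi> \<Phi> Z \<and>
            (\<forall>x \<in> X. \<forall>\<rho> \<in> carrier_mat dS dS.
               scheme_instrument dS dA \<xi> \<Phi> Z x \<rho> = lueders dS E x \<rho>)"
proof -
  have finX: "finite X" using obs by (simp add: observable_def)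
  have Xne: "X \<noteq> {}" using nt by (auto simp: nontrivial_obs_def)
  define N where "N = card X"
  have N: "N > 0" unfolding N_def using finX Xne by (simp add: card_gt_0_iff)
  obtain f where f: "bij_betw f X {..<N}"
    using ex_bij_betw_finite_nat[OF finX] unfolding N_def by (auto simp: lessThan_atLeast0)
  define g where "g = the_inv_into X f"
  have g: "bij_betw g {..<N} X" unfolding g_def by (rule bij_betw_the_inv_into[OF f])
  have gX: "\<And>c. c < N \<Longrightarrow> g c \<in> X" using g by (auto simp: bij_betw_def)
  have fg: "\<And>c. c < N \<Longrightarrow> f (g c) = c" unfolding g_def using f_the_inv_into_f_bij_betw[OF f] by auto
  have gf: "\<And>x. x \<in> X \<Longrightarrow> g (f x) = x" unfolding g_def using f by (simp add: bij_betw_def the_inv_into_f_f)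
  have fX: "\<And>x. x \<in> X \<Longrightarrow> f x < N" using f by (auto simp: bij_betw_def)
  define K where "K = (\<lambda>c. psd_sqrt dS (E (g c)))"
  have Kp: "\<And>c. c < N \<Longrightarrow> positive_op dS (K c) \<and> K c * K c = E (g c)"
    unfolding K_def using psd_sqrt_prop obs_facts(2)[OF obs gX] by blast
  have Kc: "\<And>c. c < N \<Longrightarrow> K c \<in> carrier_mat dS dS" using Kp by (simp add: positive_op_def)
  have KH: "\<And>c. c < N \<Longrightarrow> adj (K c) = K c" using Kp pos_herm by blast
  have Kinj: "\<And>c u. c < N \<Longrightarrow> u \<in> carrier_vec dS \<Longrightarrow> K c *\<^sub>v u = 0\<^sub>v dS \<Longrightarrow> u = 0\<^sub>v dS"
  proof (rule ccontr)
    fix c u assume c: "c < N" and u: "u \<in> carrier_vec dS" and Ku: "K c *\<^sub>v u = 0\<^sub>v dS" and u0: "u \<noteq> 0\<^sub>v dS"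
    have "E (g c) *\<^sub>v u = K c *\<^sub>v (K c *\<^sub>v u)" using Kp[OF c] assoc_mult_mat_vec[OF Kc[OF c] Kc[OF c] u] by simp
    also have "\<dots> = 0\<^sub>v dS" using Ku Kc[OF c] by simp
    finally have "eigenvector (E (g c)) u 0" using u u0 obs_facts(1)[OF obs gX[OF c]]
      unfolding eigenvector_def by auto
    hence "eigenvalue (E (g c)) 0" unfolding eigenvalue_def by auto
    thus False using cu gX[OF c] unfolding completely_unsharp_def by blast
  qed
  have ms: "msum dS X E = 1\<^sub>m dS" using obs by (simp add: observable_def)
  have S: "\<And>i l. i < dS \<Longrightarrow> l < dS \<Longrightarrow> (\<Sum>c<N. (K c * K c) $$ (i,l)) = (if i = l then 1 else 0)"
  proof -
    fix i l assume i: "i < dS" and l: "l < dS"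
    have "(\<Sum>c<N. (K c * K c) $$ (i,l)) = (\<Sum>c<N. E (g c) $$ (i,l))" using Kp by simp
    also have "\<dots> = (\<Sum>x\<in>X. E x $$ (i,l))" by (rule sum.reindex_bij_betw[OF g])
    also have "\<dots> = msum dS X E $$ (i,l)" using i l by (simp add: msum_def)
    finally show "(\<Sum>c<N. (K c * K c) $$ (i,l)) = (if i = l then 1 else 0)" using ms i l by simp
  qed
  define \<xi> where "\<xi> = (1 / of_nat N :: complex) \<cdot>\<^sub>m 1\<^sub>m N"
  have \<xi>c: "\<xi> \<in> carrier_mat N N" unfolding \<xi>_def by simp
  have \<xi>tr: "mtrace \<xi> = 1" using N unfolding \<xi>_def by (simp add: mtrace_def)
  have \<xi>pd: "pos_def_op N \<xi>" unfolding pos_def_op_def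
  proof (intro conjI ballI impI \<xi>c)
    fix v :: "complex vec" assume v: "v \<in> carrier_vec N" and v0: "v \<noteq> 0\<^sub>v N"
    have q: "qform N \<xi> v = of_real (1 / real N) * ip v v"
      unfolding \<xi>_def using v by (simp add: qform_smult qform_one)
    show "Im (qform N \<xi> v) = 0" unfolding q using ip_self_ge0 by simp
    show "Re (qform N \<xi> v) > 0" unfolding q using ip_self_pos[OF v v0] N by simp
  qed
  have \<xi>fr: "full_rank_state N \<xi>" using \<xi>pd posdef_pos[OF \<xi>pd] \<xi>tr
    unfolding full_rank_state_def is_state_def by simp
  define \<Phi> where "\<Phi> = PhiC dS N K"
  have ch: "is_channel (dS*N) (dS*N) \<Phi>" unfolding is_channel_def \<Phi>_def
    using PhiC_linear[where N=N and K=K and dS=dS, OF Kc] PhiC_cp[where N=N and K=K and dS=dS, OF Kc KH]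
      PhiC_tp[where N=N and K=K and dS=dS, OF Kc S] by blast
  have tl: "third_law_channel (dS*N) (dS*N) \<Phi>" unfolding third_law_channel_def
  proof (intro conjI allI impI ch)
    fix \<rho> assume r: "full_rank_state (dS*N) \<rho>"
    have rpd: "pos_def_op (dS*N) \<rho>" and rtr: "mtrace \<rho> = 1" using r by (auto simp: full_rank_state_def is_state_def)
    have rc: "\<rho> \<in> carrier_mat (dS*N) (dS*N)" using rpd by (simp add: pos_def_op_def)
    have pd: "pos_def_op (dS*N) (\<Phi> \<rho>)" unfolding \<Phi>_def by (rule PhiC_posdef[where N=N and K=K and dS=dS, OF Kc KH Kinj rpd N])
    have "mtrace (\<Phi> \<rho>) = 1" using PhiC_tp[where N=N and K=K and dS=dS, OF Kc S] rc rtr unfolding trace_preserving_def \<Phi>_def by simp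
    thus "full_rank_state (dS*N) (\<Phi> \<rho>)" using pd posdef_pos[OF pd] unfolding full_rank_state_def is_state_def by simp
  qed
  define Z where "Z = (\<lambda>x. mat N N (\<lambda>(a,b). if a = f x \<and> b = f x then 1 else 0) :: complex mat)"
  have Zp: "positive_op N (Z x)" for x unfolding positive_op_def
  proof (intro conjI ballI)
    show "Z x \<in> carrier_mat N N" unfolding Z_def by simp
    fix v :: "complex vec" assume v: "v \<in> carrier_vec N"
    have "qform N (Z x) v = (if f x < N then cnj (v $ f x) * v $ f x else 0)"
    proof -
      have "qform N (Z x) v = (\<Sum>i<N. \<Sum>j<N. (if i = f x then (if j = f x then cnj (v $ i) * v $ j else 0) else 0))"
        unfolding qform_def Z_def by (intro sum.cong refl, auto)
      also have "\<dots> = (if f x < N then cnj (v $ f x) * v $ f x else 0)"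
        by (cases "f x < N", simp_all add: sum_if_in)
      finally show ?thesis .
    qed
    moreover have "cnj (v $ f x) * v $ f x = of_real ((cmod (v $ f x))^2)"
      using complex_norm_square by (metis mult.commute)
    ultimately show "Im (qform N (Z x) v) = 0" "Re (qform N (Z x) v) \<ge> 0" by auto
  qed
  have msZ: "msum N X Z = 1\<^sub>m N"
  proof (rule eq_matI)
    fix a b assume "a < dim_row (1\<^sub>m N)" "b < dim_col (1\<^sub>m N)"
    hence a: "a < N" and b: "b < N" by auto
    have "msum N X Z $$ (a,b) = (\<Sum>x\<in>X. if a = f x \<and> b = f x then 1 else 0)"
      using a b fX by (auto simp: msum_def Z_def intro!: sum.cong)
    also have "\<dots> = (\<Sum>c<N. if a = f (g c) \<and> b = f (g c) then 1 else 0)"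
      by (rule sum.reindex_bij_betw[OF g, symmetric])
    also have "\<dots> = (\<Sum>c<N. if c = a then (if b = a then 1 else 0) else 0)"
      using fg by (intro sum.cong refl, auto)
    also have "\<dots> = 1\<^sub>m N $$ (a,b)" using a b by (simp only: sum.delta finite_lessThan, simp)
    finally show "msum N X Z $$ (a,b) = 1\<^sub>m N $$ (a,b)" .
  qed (auto simp: msum_def)
  have sch: "third_law_scheme dS X N \<xi> \<Phi> Z"
    unfolding third_law_scheme_def measurement_scheme_def
    using \<xi>fr ch tl Zp msZ by (simp add: full_rank_state_def)
  have inst: "\<forall>x \<in> X. \<forall>\<rho> \<in> carrier_mat dS dS. scheme_instrument dS N \<xi> \<Phi> Z x \<rho> = lueders dS E x \<rho>"
  proof (intro ballI)
    fix x and \<rho> :: "complex mat" assume x: "x \<in> X" and r: "\<rho> \<in> carrier_mat dS dS"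
    have "scheme_instrument dS N \<xi> \<Phi> Z x \<rho> = K (f x) * \<rho> * K (f x)"
      unfolding scheme_instrument_def \<Phi>_def Z_def by (rule PhiC_instr[where N=N and K=K and dS=dS, OF Kc \<xi>c \<xi>tr r fX[OF x]])
    also have "\<dots> = lueders dS E x \<rho>" unfolding lueders_def K_def using gf[OF x] by simp
    finally show "scheme_instrument dS N \<xi> \<Phi> Z x \<rho> = lueders dS E x \<rho>" .
  qed
  show ?thesis using N sch inst by blast
qed

theorem mainTheorem12:
  fixes dS :: nat and X :: "'x set" and E :: "'x \<Rightarrow> complex mat"
  assumes "2 \<le> dS"
    and "observable dS X E"
    and "nontrivial_obs dS X E"
  shows "(\<exists>(dA::nat) \<xi> \<Phi> Z. 0 < dA \<and> third_law_scheme dS X dA \<xi> \<Phi> Z \<and>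
            (\<forall>x \<in> X. \<forall>\<rho> \<in> carrier_mat dS dS.
               scheme_instrument dS dA \<xi> \<Phi> Z x \<rho> = lueders dS E x \<rho>))
         \<longleftrightarrow> completely_unsharp X E"
  using forward[OF assms] backward[OF assms] by blast

end
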